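(* Let Assumptions 1, 2 and 3 hold. Then \[[A_{\mathrm f}\;\;B_{\mathrm f}]=\bar\Delta_N\left(\mathrm{col}(\bar\Phi_N,\bar\Upsilon_N)\right)^\dagger,\] where $^\dagger$ denotes the Moore–Penrose pseudoinverse.
   Context: Fix $n\ge 1$ and real numbers $a_1,\dots,a_n,b_1,\dots,b_n$. The plant is the continuous-time SISO system $y^{(n)}+a_1y^{(n-1)}+\dots+a_ny=b_1u^{(n-1)}+\dots+b_nu$, represented in observability canonical form $\dot x=Ax+Bu$, $y=Cx$, $x(t)\in\mathbb{R}^n$, $x(0)=x_0$, where $C=[0_{1,n-1}\;1]$, $A$ is the $n\times n$ matrix whose first $n-1$ columns are $\begin{bmatrix}0_{1,n-1}\\ I_{n-1}\end{bmatrix}$ and whose last column is $(-a_n,\dots,-a_1)^\top$, and $B=(b_n,\dots,b_1)^\top$; a locally integrable input $u$ is applied on $[0,t_N]$. Assumption 1: the polynomials $s^n+a_1s^{n-1}+\dots+a_n$ and $b_1s^{n-1}+\dots+b_n$ are coprime. For real parameters $c_1,\dots,c_n,\beta$, $A_{\mathrm r}\in\mathbb{R}^{n\times n}$ is the matrix whose first $n-1$ rows are $[0_{n-1,1}\;I_{n-1}]$ and whose last row is $(-c_n,\dots,-c_1)$, and $B_{\mathrm r}=(0,\dots,0,1)^\top\in\mathbb{R}^n$. Assumption 2: $-\beta$ is not an eigenvalue of $A_{\mathrm r}$. The filters are $\dot\zeta=A_{\mathrm r}\zeta+B_{\mathrm r}u$, $\zeta(0)=0$; $\dot\mu=A_{\mathrm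 r}\mu+B_{\mathrm r}y$, $\mu(0)=0$; $\chi=\mathrm{col}(\zeta,\mu)\in\mathbb{R}^{2n}$; $\dot\phi=-\beta\phi+\chi$, $\phi(0)=0_{2n,1}$; $\dot\upsilon=-\beta\upsilon+u$, $\upsilon(0)=0$; $\delta=\chi-\beta\phi$. Define $A_{\mathrm f}=\begin{bmatrix}A_{\mathrm r}&0_{n,n}\\ L_b& A_a\end{bmatrix}\in\mathbb{R}^{2n\times 2n}$, where $L_b\in\mathbb{R}^{n\times n}$ has all rows zero except the last, which equals $(b_n,\dots,b_1)$, and $A_a\in\mathbb{R}^{n\times n}$ has first $n-1$ rows $[0_{n-1,1}\;I_{n-1}]$ and last row $(-a_n,\dots,-a_1)$; $B_{\mathrm f}=\mathrm{col}(0_{n-1,1},1,0_{n,1})\in\mathbb{R}^{2n}$; $G_{\mathrm f}\in\mathbb{R}^{2n\times n}$ is the matrix whose only nonzero entry is a $1$ in position $(2n,n)$. Let $\Gamma^\star=G_{\mathrm f}(A_{\mathrm r}^\top+\beta I_n)^{-1}$ and $\epsilon(t)=\Gamma^\star(\mathrm{e}^{A_{\mathrm r}^\top t}-\mathrm{e}^{-\beta t}I_n)x_0$. For sampling times $0<t_1<\dots<t_N$ let $\Delta_N=[\delta(t_1)\cdots\delta(t_N)]$, $\Phi_N=[\phi(t_1)\cdots\phi(t_N)]\in\mathbb{R}^{2n\times N}$, $\Upsilon_N=[\upsilon(t_1)\cdots\upsilon(t_N)]\in\mathbb{R}^{1\times N}$, $E_N=[\epsilon(t_1)\cdots\epsilon(t_N)]$.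 Assumption 3: there is $W_N\in\mathbb{R}^{N\times\bar N}$ with $E_NW_N=0_{2n,\bar N}$ such that, with $\bar\Delta_N=\Delta_NW_N$, $\bar\Phi_N=\Phi_NW_N$, $\bar\Upsilon_N=\Upsilon_NW_N$, one has $\mathrm{rank}(\mathrm{col}(\bar\Phi_N,\bar\Upsilon_N))=2n+1$. *)

theory Defs imports "Jordan_Normal_Form.DL_Rank" "Jordan_Normal_Form.Char_Poly"
  "Jordan_Normal_Form.Gauss_Jordan_Elimination"
  "HOL-Analysis.Analysis" "HOL-Computational_Algebra.Polynomial_Factorial"
begin

(* Conventions: matrices/vectors are Jordan_Normal_Form matrices, 0-indexed.
   Parameter sequences a, b, c :: nat => real are 1-indexed (a 1, ..., a n). *)

definition plant_A :: "nat \<Rightarrow> (nat \<Rightarrow> real) \<Rightarrow> real mat" where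
  "plant_A n a = Matrix.mat n n (\<lambda>(i,j). if j = n - 1 then - a (n - i) else if i = j + 1 then 1 else 0)"

definition plant_B :: "nat \<Rightarrow> (nat \<Rightarrow> real) \<Rightarrow> real Matrix.vec" where
  "plant_B n b = Matrix.vec n (\<lambda>i. b (n - i))"

definition plant_C :: "nat \<Rightarrow> real mat" where
  "plant_C n = Matrix.mat 1 n (\<lambda>(i,j). if j = n - 1 then 1 else 0)"

text \<open>Companion matrix: first n-1 rows [0 I], last row (-c_n, ..., -c_1).
  Used both for A_r (with c) and A_a (with a).\<close>
definition comp_mat :: "nat \<Rightarrow> (nat \<Rightarrow> real) \<Rightarrow> real mat" where
  "comp_mat n c = Matrix.mat n n (\<lambda>(i,j). if i = n - 1 then - c (n - j) else if j = i + 1 then 1 else 0)"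

definition B_r :: "nat \<Rightarrow> real Matrix.vec" where
  "B_r n = unit_vec n (n - 1)"

definition L_b :: "nat \<Rightarrow> (nat \<Rightarrow> real) \<Rightarrow> real mat" where
  "L_b n b = Matrix.mat n n (\<lambda>(i,j). if i = n - 1 then b (n - j) else 0)"

definition A_f :: "nat \<Rightarrow> (nat \<Rightarrow> real) \<Rightarrow> (nat \<Rightarrow> real) \<Rightarrow> (nat \<Rightarrow> real) \<Rightarrow> real mat" where
  "A_f n a b c = four_block_mat (comp_mat n c) (0\<^sub>m n n) (L_b n b) (comp_mat n a)"

definition B_f :: "nat \<Rightarrow> real Matrix.vec" where
  "B_f n = Matrix.vec (2 * n) (\<lambda>i. if i = n - 1 then 1 else 0)"

definition G_f :: "nat \<Rightarrow> real mat" where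
  "G_f n = Matrix.mat (2 * n) n (\<lambda>(i,j). if i = 2 * n - 1 \<and> j = n - 1 then 1 else 0)"

definition AB_f :: "nat \<Rightarrow> (nat \<Rightarrow> real) \<Rightarrow> (nat \<Rightarrow> real) \<Rightarrow> (nat \<Rightarrow> real) \<Rightarrow> real mat" where
  "AB_f n a b c = Matrix.mat (2 * n) (2 * n + 1)
     (\<lambda>(i,j). if j < 2 * n then A_f n a b c $$ (i,j) else B_f n $ i)"

definition mat_exp :: "real mat \<Rightarrow> real \<Rightarrow> real mat" where
  "mat_exp M t = Matrix.mat (dim_row M) (dim_col M)
     (\<lambda>(i,j). \<Sum>k. (t ^ k / fact k) * (M ^\<^sub>m k) $$ (i,j))"

definition Gamma_star :: "nat \<Rightarrow> (nat \<Rightarrow> real) \<Rightarrow> real \<Rightarrow> real mat" where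
  "Gamma_star n c \<beta> = G_f n * the (mat_inverse (transpose_mat (comp_mat n c) + \<beta> \<cdot>\<^sub>m 1\<^sub>m n))"

definition eps :: "nat \<Rightarrow> (nat \<Rightarrow> real) \<Rightarrow> real \<Rightarrow> real Matrix.vec \<Rightarrow> real \<Rightarrow> real Matrix.vec" where
  "eps n c \<beta> x0 t = Gamma_star n c \<beta> *\<^sub>v
     ((mat_exp (transpose_mat (comp_mat n c)) t - exp (- \<beta> * t) \<cdot>\<^sub>m 1\<^sub>m n) *\<^sub>v x0)"

text \<open>z solves z' = M z + f(t), z(0) = z0 on [0,T] in the Caratheodory sense
  (integral equation, componentwise Henstock-Kurzweil integral).\<close>
definition solves_ode :: "real \<Rightarrow> real mat \<Rightarrow> (real \<Rightarrow> real Matrix.vec) \<Rightarrow> real Matrix.vec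
    \<Rightarrow> (real \<Rightarrow> real Matrix.vec) \<Rightarrow> bool" where
  "solves_ode T M f z0 z \<longleftrightarrow>
     (\<forall>t\<in>{0..T}. dim_vec (z t) = dim_row M \<and>
        (\<forall>i<dim_row M. ((\<lambda>s. (M *\<^sub>v z s + f s) $ i) has_integral (z t $ i - z0 $ i)) {0..t}))"

text \<open>Data matrix with columns g(t_1), ..., g(t_N) (t_k = ts k, 1-indexed).\<close>
definition sample_mat :: "nat \<Rightarrow> nat \<Rightarrow> (nat \<Rightarrow> real) \<Rightarrow> (real \<Rightarrow> real Matrix.vec) \<Rightarrow> real mat" where
  "sample_mat m N ts g = Matrix.mat m N (\<lambda>(i,j). g (ts (Suc j)) $ i)"

definition is_pinv :: "real mat \<Rightarrow> real mat \<Rightarrow> bool" where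
  "is_pinv M P \<longleftrightarrow> P \<in> carrier_mat (dim_col M) (dim_row M) \<and>
     M * P * M = M \<and> P * M * P = P \<and>
     transpose_mat (M * P) = M * P \<and> transpose_mat (P * M) = P * M"

definition pinv :: "real mat \<Rightarrow> real mat" where
  "pinv M = (THE P. is_pinv M P)"

end

theory Submission
  imports Defs
begin

lemma lin_unique:
  fixes D :: "nat \<Rightarrow> real \<Rightarrow> real" and m :: "nat \<Rightarrow> nat \<Rightarrow> real"
  assumes H: "\<And>t i. t \<in> {0..T} \<Longrightarrow> i < n \<Longrightarrow> ((\<lambda>s. \<Sum>j<n. m i j * D j s) has_integral D i t) {0..t}"
    and t: "t \<in> {0..T}" and i: "i < n"
  shows "D i t = 0"
proof -
  define g where "g i s = (\<Sum>j<n. m i j * D j s)" for i s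
  have T0: "0 \<le> T" using t by auto
  have int: "g i integrable_on {0..T}" if "i<n" for i
    using H[of T i] T0 that unfolding g_def by (auto intro: has_integral_integrable)
  have Deq: "D i t = integral {0..t} (g i)" if "t \<in> {0..T}" "i<n" for i t
    using H[OF that] unfolding g_def by (simp add: integral_unique)
  have contD: "continuous_on {0..T} (D i)" if "i<n" for i
    using continuous_on_eq[OF indefinite_integral_continuous_1[OF int[OF that]]] Deq that by auto
  have contg: "continuous_on {0..T} (g i)" for i unfolding g_def
    by (intro continuous_on_sum continuous_on_mult continuous_on_const contD) auto
  have derD: "(D i has_real_derivative g i x) (at x within {0..T})" if "x\<in>{0..T}" "i<n" for x i
  proof (rule has_field_derivative_transform_within[OF integral_has_real_derivative[OF contg that(1)]])
    show "0 < (1::real)" by simp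
    show "x \<in> {0..T}" by fact
    show "\<And>y. y \<in> {0..T} \<Longrightarrow> dist y x < 1 \<Longrightarrow> integral {0..y} (g i) = D i y"
      using Deq that(2) by auto
  qed
  define L where "L = (\<Sum>i<n. \<Sum>j<n. \<bar>m i j\<bar>)"
  define E where "E s = (\<Sum>i<n. (D i s)^2)" for s
  define F where "F s = exp (-(2*L) * s) * E s" for s
  have derE: "(E has_real_derivative (\<Sum>i<n. 2 * D i x * g i x)) (at x within {0..T})" if "x\<in>{0..T}" for x
    unfolding E_def
    by (rule DERIV_sum) (auto intro!: derivative_eq_intros derD[OF that])
  have Dsq: "(D i s)^2 \<le> E s" if "i<n" for i s
    unfolding E_def using that by (intro member_le_sum) auto
  have Epos: "0 \<le> E s" for s unfolding E_def by (auto intro: sum_nonneg)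
  have bound: "(\<Sum>i<n. 2 * D i x * g i x) \<le> 2 * L * E x" for x
  proof -
    have "(\<Sum>i<n. D i x * g i x) = (\<Sum>i<n. \<Sum>j<n. m i j * (D i x * D j x))"
      unfolding g_def by (simp add: sum_distrib_left algebra_simps)
    also have "\<dots> \<le> (\<Sum>i<n. \<Sum>j<n. \<bar>m i j\<bar> * E x)"
    proof (intro sum_mono)
      fix i j assume ij: "i \<in> {..<n}" "j \<in> {..<n}"
      have "\<bar>D i x * D j x\<bar> \<le> E x"
      proof -
        have "2 * \<bar>D i x * D j x\<bar> \<le> (D i x)^2 + (D j x)^2"
          using sum_squares_bound[of "\<bar>D i x\<bar>" "\<bar>D j x\<bar>"] by (simp add: abs_mult)
        then show ?thesis using Dsq[of i x] Dsq[of j x] ij by auto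
      qed
      then have "m i j * (D i x * D j x) \<le> \<bar>m i j\<bar> * \<bar>D i x * D j x\<bar>"
        by (metis abs_ge_self abs_mult)
      also have "\<dots> \<le> \<bar>m i j\<bar> * E x" by (rule mult_left_mono) (use \<open>\<bar>D i x * D j x\<bar> \<le> E x\<close> in auto)
      finally show "m i j * (D i x * D j x) \<le> \<bar>m i j\<bar> * E x" .
    qed
    also have "\<dots> = L * E x" unfolding L_def by (simp add: sum_distrib_right)
    finally have "(\<Sum>i<n. D i x * g i x) \<le> L * E x" .
    moreover have "(\<Sum>i<n. 2 * D i x * g i x) = 2 * (\<Sum>i<n. D i x * g i x)"
      by (simp add: sum_distrib_left mult.assoc)
    ultimately show ?thesis by simp
  qed
  have derF: "(F has_real_derivative exp (-(2*L) * x) * ((\<Sum>i<n. 2 * D i x * g i x) - 2 * L * E x)) (at x within {0..T})"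
    if "x\<in>{0..T}" for x
    unfolding F_def
    by (rule derivative_eq_intros derE[OF that] refl | simp add: algebra_simps)+
  have D0: "D i 0 = 0" if "i<n" for i
    using H[of 0 i] T0 that has_integral_unique[OF _ has_integral_refl(2)] by fastforce
  have F0: "F 0 = 0" unfolding F_def E_def using D0 by simp
  have Fcont: "continuous_on {0..T} F"
    by (rule DERIV_continuous_on) (rule derF)
  have "F t \<le> F 0"
  proof (rule DERIV_nonpos_imp_decreasing_open[of 0 t F])
    show "0 \<le> t" using t by auto
  next
    fix x assume x: "0 < x" "x < t"
    then have "x \<in> {0..T}" using t by auto
    have "at x within {0..T} = at x" using x t by (intro at_within_Icc_at) auto
    then show "\<exists>y. DERIV F x :> y \<and> y \<le> 0"
      using derF[OF \<open>x \<in> {0..T}\<close>] bound[of x]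
      by (intro exI[of _ "exp (-(2*L) * x) * ((\<Sum>i<n. 2 * D i x * g i x) - 2 * L * E x)"])
         (auto intro!: mult_nonneg_nonpos)
  next
    show "continuous_on {0..t} F" using t by (intro continuous_on_subset[OF Fcont]) auto
  qed
  then have "E t \<le> 0" using F0 unfolding F_def by (simp add: mult_le_0_iff)
  then have "E t = 0" using Epos[of t] by simp
  then show ?thesis using Dsq[OF i, of t] by simp
qed

lemma pow_mat_commute:
  fixes M :: "'a::semiring_1 mat"
  assumes M: "M \<in> carrier_mat n n"
  shows "M * M ^\<^sub>m k = M ^\<^sub>m k * M"
proof (induct k)
  case 0 then show ?case using M by simp
next
  case (Suc k)
  have "M * M ^\<^sub>m Suc k = (M * M ^\<^sub>m k) * M"
    using M by (simp add: assoc_mult_mat[symmetric, of _ n n _ n _ n])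
  then show ?case using Suc by simp
qed

lemma pow_mat_entry_bound:
  fixes M :: "real mat"
  assumes M: "M \<in> carrier_mat n n"
  shows "i < n \<Longrightarrow> j < n \<Longrightarrow> \<bar>(M ^\<^sub>m k) $$ (i,j)\<bar> \<le> (\<Sum>a<n. \<Sum>b<n. \<bar>M $$ (a,b)\<bar>) ^ k"
proof (induct k arbitrary: i j)
  case 0 then show ?case using M by auto
next
  case (Suc k)
  define R where "R = (\<Sum>a<n. \<Sum>b<n. \<bar>M $$ (a,b)\<bar>)"
  have R0: "0 \<le> R" unfolding R_def by (auto intro: sum_nonneg)
  have "(M ^\<^sub>m Suc k) $$ (i,j) = (\<Sum>l<n. (M ^\<^sub>m k) $$ (i,l) * M $$ (l,j))"
    using M Suc.prems by (simp add: index_mult_mat scalar_prod_def row_def col_def atLeast0LessThan)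
  also have "\<bar>\<dots>\<bar> \<le> (\<Sum>l<n. R ^ k * \<bar>M $$ (l,j)\<bar>)"
    unfolding R_def
    by (rule order_trans[OF sum_abs], rule sum_mono)
       (auto simp: abs_mult intro!: mult_right_mono Suc.hyps Suc.prems)
  also have "\<dots> = R ^ k * (\<Sum>l<n. \<bar>M $$ (l,j)\<bar>)" by (simp add: sum_distrib_left)
  also have "\<dots> \<le> R ^ k * R"
  proof (rule mult_left_mono)
    show "(\<Sum>l<n. \<bar>M $$ (l,j)\<bar>) \<le> R" unfolding R_def
      by (intro sum_mono member_le_sum) (use Suc.prems in auto)
    show "0 \<le> R ^ k" using R0 by simp
  qed
  finally show ?case unfolding R_def by (simp add: mult.commute)
qed

lemma mat_exp_summable:
  fixes M :: "real mat"
  assumes M: "M \<in> carrier_mat n n" and ij: "i < n" "j < n"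
  shows "summable (\<lambda>k. ((M ^\<^sub>m k) $$ (i,j) / fact k) * y ^ k)"
proof -
  define R where "R = (\<Sum>a<n. \<Sum>b<n. \<bar>M $$ (a,b)\<bar>)"
  have "summable (\<lambda>k. inverse (fact k) * (R * \<bar>y\<bar>) ^ k)" by (rule summable_exp)
  then show ?thesis
  proof (rule summable_comparison_test[rotated], intro exI allI impI)
    fix k :: nat
    have "norm ((M ^\<^sub>m k) $$ (i,j) / fact k * y ^ k) = \<bar>(M ^\<^sub>m k) $$ (i,j)\<bar> * \<bar>y\<bar>^k / fact k"
      by (simp add: abs_mult power_abs)
    also have "\<dots> \<le> R^k * \<bar>y\<bar>^k / fact k"
      using pow_mat_entry_bound[OF M ij, of k] unfolding R_def
      by (intro divide_right_mono mult_right_mono) auto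
    also have "\<dots> = inverse (fact k) * (R * \<bar>y\<bar>) ^ k" by (simp add: power_mult_distrib field_simps)
    finally show "norm ((M ^\<^sub>m k) $$ (i,j) / fact k * y ^ k) \<le> inverse (fact k) * (R * \<bar>y\<bar>) ^ k" .
  qed
qed

lemma mat_exp_entry:
  assumes M: "M \<in> carrier_mat n n" and ij: "i < n" "j < n"
  shows "mat_exp M t $$ (i,j) = (\<Sum>k. ((M ^\<^sub>m k) $$ (i,j) / fact k) * t ^ k)"
  using M ij unfolding mat_exp_def by (simp add: field_simps)

lemma mat_exp_entry_deriv:
  assumes M: "M \<in> carrier_mat n n" and ij: "i < n" "j < n"
  shows "((\<lambda>t. mat_exp M t $$ (i,j)) has_real_derivative (\<Sum>l<n. M $$ (i,l) * mat_exp M t $$ (l,j))) (at t)"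
proof -
  define c where "c k = (M ^\<^sub>m k) $$ (i,j) / fact k" for k
  have d: "((\<lambda>t. \<Sum>k. c k * t ^ k) has_real_derivative (\<Sum>k. diffs c k * t ^ k)) (at t)"
    by (rule termdiffs_strong_converges_everywhere) (use mat_exp_summable[OF M ij] in \<open>simp add: c_def\<close>)
  have "diffs c k = (M ^\<^sub>m Suc k) $$ (i,j) / fact k" for k
  proof -
    have "fact k + fact k * real k > 0" by (simp add: add_pos_nonneg)
    then show ?thesis unfolding diffs_def c_def by (simp add: field_simps)
  qed
  then have "(\<Sum>k. diffs c k * t ^ k) = (\<Sum>k. (\<Sum>l<n. M $$ (i,l) * ((M ^\<^sub>m k) $$ (l,j) / fact k * t ^ k)))"
  proof -
    have e: "(M ^\<^sub>m Suc k) $$ (i,j) = (\<Sum>l<n. M $$ (i,l) * (M ^\<^sub>m k) $$ (l,j))" for k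
    proof -
      have "M ^\<^sub>m Suc k = M * M ^\<^sub>m k" using pow_mat_commute[OF M] by simp
      then show ?thesis using M ij by (simp add: index_mult_mat scalar_prod_def row_def col_def atLeast0LessThan)
    qed
    show ?thesis unfolding \<open>\<And>k. diffs c k = _\<close> e
      by (simp add: sum_distrib_right sum_divide_distrib mult.assoc)
  qed
  also have "\<dots> = (\<Sum>l<n. \<Sum>k. M $$ (i,l) * ((M ^\<^sub>m k) $$ (l,j) / fact k * t ^ k))"
    by (rule suminf_sum, rule summable_mult, rule mat_exp_summable[OF M], auto simp: ij)
  also have "\<dots> = (\<Sum>l<n. M $$ (i,l) * mat_exp M t $$ (l,j))"
  proof (intro sum.cong refl)
    fix l assume "l \<in> {..<n}"
    then have l: "l < n" by simp
    show "(\<Sum>k. M $$ (i,l) * ((M ^\<^sub>m k) $$ (l,j) / fact k * t ^ k)) = M $$ (i,l) * mat_exp M t $$ (l,j)"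
      unfolding mat_exp_entry[OF M l ij(2)]
      by (rule suminf_mult[OF mat_exp_summable[OF M l ij(2)]])
  qed
  finally show ?thesis using d mat_exp_entry[OF M ij] unfolding c_def
    by (simp add: mat_exp_entry[OF M ij])
qed

lemma mat_exp_dims[simp]: "dim_row (mat_exp M t) = dim_row M" "dim_col (mat_exp M t) = dim_col M"
  unfolding mat_exp_def by auto

lemma mat_exp_carrier: "M \<in> carrier_mat n n \<Longrightarrow> mat_exp M t \<in> carrier_mat n n"
  unfolding mat_exp_def by auto

lemma mat_exp_vec_entry:
  assumes M: "(M::real mat) \<in> carrier_mat n n" and x0: "x0 \<in> carrier_vec n" and i: "i < n"
  shows "(mat_exp M t *\<^sub>v x0) $ i = (\<Sum>j<n. mat_exp M t $$ (i,j) * x0 $ j)"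
  using M x0 i
  by (simp add: scalar_prod_def row_def atLeast0LessThan)

lemma mat_exp_zero_vec:
  assumes M: "(M::real mat) \<in> carrier_mat n n" and x0: "x0 \<in> carrier_vec n"
  shows "mat_exp M 0 *\<^sub>v x0 = x0"
proof (rule eq_vecI)
  show "dim_vec (mat_exp M 0 *\<^sub>v x0) = dim_vec x0" using M x0 mat_exp_carrier[OF M] by simp
  fix i assume "i < dim_vec x0"
  then have i: "i < n" using x0 by simp
  have e: "mat_exp M 0 $$ (i,j) = (if i = j then 1 else 0)" if j: "j < n" for j
    unfolding mat_exp_entry[OF M i j] using powser_zero[of "\<lambda>k. (M ^\<^sub>m k) $$ (i,j) / fact k"] M i j
    by simp
  show "(mat_exp M 0 *\<^sub>v x0) $ i = x0 $ i"
  proof -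
    have "(\<Sum>j<n. mat_exp M 0 $$ (i,j) * x0 $ j) = (\<Sum>j<n. (if i = j then x0 $ j else 0))"
      by (rule sum.cong) (auto simp: e)
    then show ?thesis unfolding mat_exp_vec_entry[OF M x0 i] using i by simp
  qed
qed

lemma mat_exp_vec_deriv:
  assumes M: "(M::real mat) \<in> carrier_mat n n" and x0: "x0 \<in> carrier_vec n" and i: "i < n"
  shows "((\<lambda>t. (mat_exp M t *\<^sub>v x0) $ i) has_real_derivative (\<Sum>l<n. M $$ (i,l) * (mat_exp M t *\<^sub>v x0) $ l)) (at t)"
proof -
  have "((\<lambda>t. \<Sum>j<n. mat_exp M t $$ (i,j) * x0 $ j) has_real_derivative
      (\<Sum>j<n. (\<Sum>l<n. M $$ (i,l) * mat_exp M t $$ (l,j)) * x0 $ j)) (at t)"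
    by (rule DERIV_sum, rule DERIV_cmult_right, rule mat_exp_entry_deriv[OF M i]) auto
  also have "(\<Sum>j<n. (\<Sum>l<n. M $$ (i,l) * mat_exp M t $$ (l,j)) * x0 $ j)
      = (\<Sum>l<n. M $$ (i,l) * (mat_exp M t *\<^sub>v x0) $ l)"
  proof -
    have "(\<Sum>j<n. (\<Sum>l<n. M $$ (i,l) * mat_exp M t $$ (l,j)) * x0 $ j)
       = (\<Sum>j<n. \<Sum>l<n. M $$ (i,l) * (mat_exp M t $$ (l,j) * x0 $ j))"
      by (simp add: sum_distrib_right mult.assoc)
    also have "\<dots> = (\<Sum>l<n. \<Sum>j<n. M $$ (i,l) * (mat_exp M t $$ (l,j) * x0 $ j))"
      by (rule sum.swap)
    also have "\<dots> = (\<Sum>l<n. M $$ (i,l) * (mat_exp M t *\<^sub>v x0) $ l)"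
      by (simp add: mat_exp_vec_entry[OF M x0] sum_distrib_left)
    finally show ?thesis .
  qed
  finally show ?thesis unfolding mat_exp_vec_entry[OF M x0 i] .
qed

definition gam :: "nat \<Rightarrow> (nat \<Rightarrow> real) \<Rightarrow> nat \<Rightarrow> real" where
  "gam n c l = (if l = n then 1 else if l < n then c (n - l) else 0)"

definition bez :: "nat \<Rightarrow> (nat \<Rightarrow> real) \<Rightarrow> (nat \<Rightarrow> real) \<Rightarrow> nat \<Rightarrow> nat \<Rightarrow> real" where
  "bez n c v i j = (\<Sum>k\<le>i. gam n c (i+j+1-k) * v k - v (i+j+1-k) * gam n c k)"

lemma sum_reflect:
  fixes f g :: "nat \<Rightarrow> real"
  shows "(\<Sum>k\<in>{a..b}. f k * g (a+b-k)) = (\<Sum>k\<in>{a..b}. f (a+b-k) * g k)"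
  by (subst sum.atLeastAtMost_rev) (auto intro!: sum.cong simp: add.commute)

lemma bez_c1:
  assumes v: "\<And>l. l \<ge> n \<Longrightarrow> v l = 0" and i: "i < n"
  shows "bez n c v i (n-1) = v i"
proof -
  have "bez n c v i (n-1) = (\<Sum>k\<le>i. if k = i then v k else 0)"
    unfolding bez_def
  proof (rule sum.cong[OF refl])
    fix k assume k: "k \<in> {..i}"
    then have "v (i + (n-1) + 1 - k) = 0" using v i by auto
    moreover have "gam n c (i + (n-1) + 1 - k) = (if k = i then 1 else 0)"
      unfolding gam_def using k i by auto
    ultimately show "gam n c (i + (n-1) + 1 - k) * v k - v (i + (n-1) + 1 - k) * gam n c k = (if k = i then v k else 0)"
      by simp
  qed
  then show ?thesis by simp
qed

lemma bez_c3:
  assumes v: "\<And>l. l \<ge> n \<Longrightarrow> v l = 0" and j: "j < n"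
  shows "bez n c v (n-1) j = v j"
proof -
  have n: "n \<ge> 1" using j by simp
  have split: "{..n-1} = {..<j} \<union> {j} \<union> {j+1..n-1}" using j by auto
  have "bez n c v (n-1) j = (\<Sum>k\<le>n-1. gam n c (n+j-k) * v k - v (n+j-k) * gam n c k)"
    unfolding bez_def using n by (intro sum.cong) auto
  also have "\<dots> = (\<Sum>k\<in>{..<j}. gam n c (n+j-k) * v k - v (n+j-k) * gam n c k)
      + (gam n c n * v j - v n * gam n c j)
      + (\<Sum>k\<in>{j+1..n-1}. gam n c (n+j-k) * v k - v (n+j-k) * gam n c k)"
    unfolding split by (subst sum.union_disjoint, auto)+
  also have "(\<Sum>k\<in>{..<j}. gam n c (n+j-k) * v k - v (n+j-k) * gam n c k) = 0"
    by (rule sum.neutral) (auto simp: gam_def v)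
  also have "(\<Sum>k\<in>{j+1..n-1}. gam n c (n+j-k) * v k - v (n+j-k) * gam n c k) = 0"
  proof -
    have e: "(j+1)+(n-1) = n+j" using n by simp
    have "(\<Sum>k\<in>{j+1..n-1}. gam n c (n+j-k) * v k) = (\<Sum>k\<in>{j+1..n-1}. v k * gam n c (n+j-k))"
      by (simp add: mult.commute)
    also have "\<dots> = (\<Sum>k\<in>{j+1..n-1}. v (n+j-k) * gam n c k)"
      using sum_reflect[of v "gam n c" "j+1" "n-1"] unfolding e .
    finally show ?thesis by (simp add: sum_subtractf)
  qed
  finally show ?thesis using v[of n] by (simp add: gam_def)
qed

lemma bez_c2:
  assumes v: "\<And>l. l \<ge> n \<Longrightarrow> v l = 0" and i: "i < n" and j: "j < n"
  shows "(if j \<ge> 1 then bez n c v i (j-1) else 0) - v i * gam n c j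
       = (if i \<ge> 1 then bez n c v (i-1) j else 0) - gam n c i * v j"
proof (cases "i \<ge> 1")
  case True
  then obtain i' where i': "i = Suc i'" by (cases i) auto
  show ?thesis
  proof (cases "j \<ge> 1")
    case True
    then obtain j' where j': "j = Suc j'" by (cases j) auto
    have "bez n c v i (j-1) = bez n c v (i-1) j + (gam n c j * v i - v j * gam n c i)"
      unfolding bez_def i' j' by (simp add: sum.atMost_Suc)
    then show ?thesis using True \<open>i \<ge> 1\<close> by (simp add: algebra_simps)
  next
    case False
    then have j0: "j = 0" by simp
    have "(\<Sum>k\<in>{0..i}. gam n c k * v (0+i-k)) = (\<Sum>k\<in>{0..i}. gam n c (0+i-k) * v k)"
      by (rule sum_reflect)
    then have r: "(\<Sum>k\<le>i. gam n c k * v (i-k)) = (\<Sum>k\<le>i. gam n c (i-k) * v k)"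
      by (simp add: atMost_atLeast0)
    have "bez n c v (i-1) 0 = (\<Sum>k\<le>i'. gam n c (i-k) * v k) - (\<Sum>k\<le>i'. v (i-k) * gam n c k)"
      unfolding bez_def i' by (simp add: sum_subtractf)
    also have "(\<Sum>k\<le>i'. gam n c (i-k) * v k) = (\<Sum>k\<le>i. gam n c (i-k) * v k) - gam n c 0 * v i"
      unfolding i' by (simp add: sum.atMost_Suc)
    also have "(\<Sum>k\<le>i'. v (i-k) * gam n c k) = (\<Sum>k\<le>i. gam n c k * v (i-k)) - gam n c i * v 0"
      unfolding i' by (simp add: sum.atMost_Suc mult.commute)
    finally have "bez n c v (i-1) 0 = gam n c i * v 0 - gam n c 0 * v i" using r by simp
    then show ?thesis using j0 True by simp
  qed
next
  case False
  then have i0: "i = 0" by simp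
  show ?thesis
  proof (cases "j \<ge> 1")
    case True
    have "bez n c v 0 (j-1) = gam n c j * v 0 - v j * gam n c 0"
      unfolding bez_def using True by simp
    then show ?thesis using i0 True by simp
  next
    case False
    then have "j = 0" by simp
    then show ?thesis using i0 by simp
  qed
qed

lemma sum_comp_col:
  fixes f :: "nat \<Rightarrow> real"
  assumes l: "l < n"
  shows "(\<Sum>j<n. f j * (if j = n-1 then A else if l = j+1 then 1 else 0))
       = f (n-1) * A + (if l \<ge> 1 then f (l-1) else 0)"
proof -
  obtain n' where n': "n = Suc n'" using l by (cases n) auto
  have "(\<Sum>j<n'. f j * (if j = n-1 then A else if l = j+1 then 1 else 0))
      = (\<Sum>j<n'. if j = l - 1 then (if l \<ge> 1 then f j else 0) else 0)"
    using l n' by (intro sum.cong) auto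
  also have "\<dots> = (if l \<ge> 1 then f (l-1) else 0)"
    using l n' by (auto simp: sum.delta')
  finally show ?thesis unfolding n' by (simp add: sum.lessThan_Suc)
qed

lemma comp_mat_entry:
  assumes "i < n" "j < n"
  shows "comp_mat n c $$ (i,j) = (if i = n-1 then - gam n c j else if j = i+1 then 1 else 0)"
  using assms unfolding comp_mat_def gam_def by auto

lemma bez_comm:
  assumes v: "\<And>l. l \<ge> n \<Longrightarrow> v l = 0" and i: "i < n" and l: "l < n"
  shows "(\<Sum>j<n. bez n c v i j * comp_mat n c $$ (j,l)) = (\<Sum>m<n. comp_mat n c $$ (m,i) * bez n c v m l)"
proof -
  have "(\<Sum>j<n. bez n c v i j * comp_mat n c $$ (j,l))
      = (\<Sum>j<n. bez n c v i j * (if j = n-1 then - gam n c l else if l = j+1 then 1 else 0))"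
    using l by (intro sum.cong) (auto simp: comp_mat_entry)
  also have "\<dots> = bez n c v i (n-1) * (- gam n c l) + (if l \<ge> 1 then bez n c v i (l-1) else 0)"
    by (rule sum_comp_col[OF l])
  also have "\<dots> = (if l \<ge> 1 then bez n c v i (l-1) else 0) - v i * gam n c l"
    using bez_c1[OF v i] by simp
  also have "\<dots> = (if i \<ge> 1 then bez n c v (i-1) l else 0) - gam n c i * v l"
    by (rule bez_c2[OF v i l])
  also have "\<dots> = bez n c v (n-1) l * (- gam n c i) + (if i \<ge> 1 then bez n c v (i-1) l else 0)"
    using bez_c3[OF v l] by simp
  also have "\<dots> = (\<Sum>m<n. bez n c v m l * (if m = n-1 then - gam n c i else if i = m+1 then 1 else 0))"
    by (rule sum_comp_col[OF i, symmetric])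
  also have "\<dots> = (\<Sum>m<n. comp_mat n c $$ (m,i) * bez n c v m l)"
    using i by (intro sum.cong) (auto simp: comp_mat_entry)
  finally show ?thesis .
qed

lemma full_rank_col_space:
  fixes M :: "real mat"
  assumes M: "M \<in> carrier_mat m k" and r: "vec_space.rank m M = m"
    and y: "y \<in> carrier_vec m"
  shows "\<exists>x\<in>carrier_vec k. M *\<^sub>v x = y"
proof -
  interpret V: vec_space "TYPE(real)" m .
  obtain S where S: "maximal S (\<lambda>T. T \<subseteq> set (cols M) \<and> V.lin_indpt T)"
    using maximal_exists[of "(\<lambda>T. T \<subseteq> set (cols M) \<and> V.lin_indpt T)" "card (set (cols M))" "{}"]
    by (meson List.finite_set card_mono empty_iff empty_subsetI V.finite_lin_indpt2 rev_finite_subset)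
  have cS: "card S = m" using V.rank_card_indpt[OF M S] r by simp
  have Ssub: "S \<subseteq> set (cols M)" and li: "V.lin_indpt S" using S unfolding maximal_def by auto
  have colsC: "set (cols M) \<subseteq> carrier_vec m" using M cols_dim by blast
  have fS: "finite S" using Ssub finite_subset by blast
  have "V.basis S"
    by (rule V.dim_li_is_basis) (use fS Ssub colsC li cS V.dim_is_n in auto)
  then have "V.span S = carrier_vec m" unfolding V.basis_def by simp
  moreover have "V.span S \<subseteq> V.span (set (cols M))" using Ssub by (rule V.span_is_monotone)
  ultimately have "y \<in> V.span (set (cols M))" using y by auto
  then have "y \<in> V.col_space M" unfolding V.col_space_def .
  then show ?thesis unfolding V.col_space_eq[OF M] using M by auto
qed

lemma scalar_prod_self_zero:
  fixes v :: "real Matrix.vec"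
  assumes "v \<bullet> v = 0"
  shows "v = 0\<^sub>v (dim_vec v)"
proof (rule eq_vecI)
  fix i assume i: "i < dim_vec (0\<^sub>v (dim_vec v))"
  have "(\<Sum>j\<in>{0..<dim_vec v}. v $ j * v $ j) = 0" using assms unfolding scalar_prod_def by simp
  then have "\<forall>j\<in>{0..<dim_vec v}. v $ j * v $ j = 0"
    by (subst sum_nonneg_eq_0_iff[symmetric]) auto
  then show "v $ i = 0\<^sub>v (dim_vec v) $ i" using i by auto
qed simp

lemma pinv_right_inverse:
  fixes M :: "real mat"
  assumes M: "M \<in> carrier_mat m k" and r: "vec_space.rank m M = m"
  shows "M * pinv M = 1\<^sub>m m \<and> pinv M \<in> carrier_mat k m"
proof -
  define MT where "MT = transpose_mat M"
  have MT: "MT \<in> carrier_mat k m" using M unfolding MT_def by auto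
  define G where "G = M * MT"
  have G: "G \<in> carrier_mat m m" using M MT unfolding G_def by auto
  have GT: "transpose_mat G = G" unfolding G_def MT_def using M by (simp add: transpose_mult[OF M])
  have ker: "v = 0\<^sub>v m" if v: "v \<in> carrier_vec m" and Gv: "G *\<^sub>v v = 0\<^sub>v m" for v
  proof -
    have "(MT *\<^sub>v v) \<bullet> (MT *\<^sub>v v) = v \<bullet> (M *\<^sub>v (MT *\<^sub>v v))"
      unfolding MT_def by (rule transpose_vec_mult_scalar[OF M _ v]) (use MT MT_def v in auto)
    also have "M *\<^sub>v (MT *\<^sub>v v) = G *\<^sub>v v" unfolding G_def using M MT v by simp
    finally have "(MT *\<^sub>v v) \<bullet> (MT *\<^sub>v v) = 0" using Gv v by simp
    then have MTv: "MT *\<^sub>v v = 0\<^sub>v k" using scalar_prod_self_zero MT by fastforce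
    obtain x where x: "x \<in> carrier_vec k" "M *\<^sub>v x = v" using full_rank_col_space[OF M r v] by blast
    have "v \<bullet> v = (MT *\<^sub>v v) \<bullet> x"
      unfolding MT_def using transpose_vec_mult_scalar[OF M x(1) v] x(2) by simp
    also have "\<dots> = 0" using MTv x by simp
    finally show ?thesis using scalar_prod_self_zero[of v] v by simp
  qed
  have "Determinant.det G \<noteq> 0"
    using ker det_0_iff_vec_prod_zero_field[OF G] by auto
  then obtain Gi where Gi: "mat_inverse G = Some Gi"
    using mat_inverse(1)[OF G] det_non_zero_imp_unit[OF G] by (metis option.exhaust)
  from mat_inverse(2)[OF G Gi] have GGi: "G * Gi = 1\<^sub>m m" and GiG: "Gi * G = 1\<^sub>m m" and Gic: "Gi \<in> carrier_mat m m"
    by auto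
  have GiT: "transpose_mat Gi = Gi"
  proof -
    have "transpose_mat Gi * G = 1\<^sub>m m"
      using arg_cong[OF GGi, of transpose_mat] transpose_mult[OF G Gic] GT by simp
    then have "transpose_mat Gi = transpose_mat Gi * (G * Gi)" using GGi Gic by simp
    also have "\<dots> = (transpose_mat Gi * G) * Gi" using Gic G by simp
    also have "\<dots> = Gi" using \<open>transpose_mat Gi * G = 1\<^sub>m m\<close> Gic by simp
    finally show ?thesis .
  qed
  define P where "P = MT * Gi"
  have P: "P \<in> carrier_mat k m" unfolding P_def using MT Gic by auto
  have MP: "M * P = 1\<^sub>m m" unfolding P_def using M MT Gic GGi unfolding G_def by simp
  have PT: "transpose_mat P = Gi * M"
    unfolding P_def MT_def using transpose_mult[of "transpose_mat M" k m Gi m] M Gic GiT by simp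
  have PMT: "transpose_mat (P * M) = P * M"
    using transpose_mult[OF P M] PT unfolding P_def MT_def using M Gic by simp
  have isP: "is_pinv M P"
    unfolding is_pinv_def using M P MP PMT by simp
  have uniq: "Q = P" if Q: "is_pinv M Q" for Q
  proof -
    have Qc: "Q \<in> carrier_mat k m" and MQM: "M * Q * M = M" and QMT: "transpose_mat (Q * M) = Q * M"
      using Q M unfolding is_pinv_def by auto
    have "P * M = transpose_mat (P * M)" using PMT by simp
    also have "\<dots> = transpose_mat M * transpose_mat P" using transpose_mult[OF P M] .
    also have "transpose_mat M = transpose_mat (M * Q * M)" using MQM by simp
    also have "\<dots> = transpose_mat (Q * M) * transpose_mat M"
      using transpose_mult[OF M, of "Q * M" k] Qc M by (simp add: assoc_mult_mat[OF M Qc M])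
    also have "\<dots> * transpose_mat P = (Q * M) * (transpose_mat M * transpose_mat P)"
      unfolding QMT using Qc M P by (intro assoc_mult_mat[of _ k k _ m _ k]) auto
    also have "transpose_mat M * transpose_mat P = transpose_mat (P * M)" using transpose_mult[OF P M] by simp
    also have "\<dots> = P * M" using PMT .
    also have "(Q * M) * (P * M) = Q * (M * (P * M))" using Qc M P by (meson assoc_mult_mat mult_carrier_mat)
    also have "M * (P * M) = (M * P) * M" using M P by simp
    also have "\<dots> = M" using MP M by simp
    finally have PMQM: "P * M = Q * M" .
    have "Q = Q * (M * P)" using MP Qc by simp
    also have "\<dots> = (Q * M) * P" using Qc M P by simp
    also have "\<dots> = (P * M) * P" using PMQM by simp
    also have "\<dots> = P * (M * P)" using P M by simp
    also have "\<dots> = P" using MP P by simp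
    finally show ?thesis .
  qed
  have "pinv M = P" unfolding pinv_def using isP uniq by (rule the_equality)
  then show ?thesis using MP P by simp
qed

lemma sum_comm_lemma:
  fixes K A :: "nat \<Rightarrow> nat \<Rightarrow> real" and f :: "nat \<Rightarrow> real"
  assumes KA: "\<And>i l. i < n \<Longrightarrow> l < n \<Longrightarrow> (\<Sum>j<n. K i j * A j l) = (\<Sum>m<n. A m i * K m l)"
    and i: "i < n"
  shows "(\<Sum>j<n. K i j * (\<Sum>l<n. A j l * f l)) = (\<Sum>l<n. A l i * (\<Sum>j<n. K l j * f j))"
proof -
  have "(\<Sum>j<n. K i j * (\<Sum>l<n. A j l * f l)) = (\<Sum>j<n. \<Sum>l<n. K i j * A j l * f l)"
    by (simp add: sum_distrib_left mult.assoc)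
  also have "\<dots> = (\<Sum>l<n. \<Sum>j<n. K i j * A j l * f l)" by (rule sum.swap)
  also have "\<dots> = (\<Sum>l<n. (\<Sum>j<n. K i j * A j l) * f l)" by (simp add: sum_distrib_right)
  also have "\<dots> = (\<Sum>l<n. (\<Sum>m<n. A m i * K m l) * f l)" using KA i by simp
  also have "\<dots> = (\<Sum>l<n. \<Sum>m<n. A m i * K m l * f l)" by (simp add: sum_distrib_right)
  also have "\<dots> = (\<Sum>m<n. \<Sum>l<n. A m i * K m l * f l)" by (rule sum.swap)
  also have "\<dots> = (\<Sum>l<n. A l i * (\<Sum>j<n. K l j * f j))" by (simp add: sum_distrib_left mult.assoc)
  finally show ?thesis .
qed

lemma sum_if_last:
  fixes f :: "nat \<Rightarrow> real"
  assumes "n \<ge> 1"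
  shows "(\<Sum>j<n. f j * (if j = n-1 then y else 0)) = f (n-1) * y"
  using assms by (simp add: if_distrib[of "(*) _"] sum.delta' cong: if_cong)

lemma plant_A_entry:
  assumes "i < n" "l < n"
  shows "plant_A n a $$ (i,l) = (if l = n-1 then - a (n-i) else if i = l+1 then 1 else 0)"
  using assms unfolding plant_A_def by auto

lemma mat_vec_entry:
  assumes "A \<in> carrier_mat m n" "v \<in> carrier_vec n" "i < m"
  shows "(A *\<^sub>v v) $ i = (\<Sum>l<n. A $$ (i,l) * v $ l)"
  using assms by (simp add: scalar_prod_def row_def atLeast0LessThan mult.commute)

lemma q_eq:
  fixes X Z Mu :: "nat \<Rightarrow> real \<Rightarrow> real" and u :: "real \<Rightarrow> real"
  assumes n1: "n \<ge> 1" and x0: "x0 \<in> carrier_vec n"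
    and HX: "\<And>t i. t \<in> {0..T} \<Longrightarrow> i < n \<Longrightarrow>
      ((\<lambda>s. (\<Sum>l<n. plant_A n a $$ (i,l) * X l s) + u s * b (n-i)) has_integral (X i t - x0 $ i)) {0..t}"
    and HZ: "\<And>t i. t \<in> {0..T} \<Longrightarrow> i < n \<Longrightarrow>
      ((\<lambda>s. (\<Sum>l<n. comp_mat n c $$ (i,l) * Z l s) + (if i = n-1 then u s else 0)) has_integral Z i t) {0..t}"
    and HMu: "\<And>t i. t \<in> {0..T} \<Longrightarrow> i < n \<Longrightarrow>
      ((\<lambda>s. (\<Sum>l<n. comp_mat n c $$ (i,l) * Mu l s) + (if i = n-1 then X (n-1) s else 0)) has_integral Mu i t) {0..t}"
    and t: "t \<in> {0..T}"
  shows "X (n-1) t + (\<Sum>l<n. (a (n-l) - c (n-l)) * Mu l t) - (\<Sum>l<n. b (n-l) * Z l t)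
       = (mat_exp (transpose_mat (comp_mat n c)) t *\<^sub>v x0) $ (n-1)"
proof -
  define AR where "AR j l = comp_mat n c $$ (j,l)" for j l
  define MT where "MT = transpose_mat (comp_mat n c)"
  have MT: "MT \<in> carrier_mat n n" unfolding MT_def comp_mat_def by auto
  have MTe: "MT $$ (i,l) = AR l i" if "i<n" "l<n" for i l
    using that unfolding MT_def AR_def comp_mat_def by auto
  define wt where "wt i s = (mat_exp MT s *\<^sub>v x0) $ i" for i s
  have Hw: "((\<lambda>s. \<Sum>l<n. AR l i * wt l s) has_integral (wt i t - x0 $ i)) {0..t}"
    if t: "t \<in> {0..T}" and i: "i < n" for t i
  proof -
    have "((\<lambda>s. \<Sum>l<n. AR l i * wt l s) has_integral (wt i t - wt i 0)) {0..t}"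
    proof (rule fundamental_theorem_of_calculus)
      show "0 \<le> t" using t by auto
      fix s assume "s \<in> {0..t}"
      have "((\<lambda>s. wt i s) has_real_derivative (\<Sum>l<n. AR l i * wt l s)) (at s)"
      proof -
        have "(\<Sum>l<n. MT $$ (i,l) * (mat_exp MT s *\<^sub>v x0) $ l) = (\<Sum>l<n. AR l i * (mat_exp MT s *\<^sub>v x0) $ l)"
          by (intro sum.cong refl) (simp add: MTe i)
        then show ?thesis using mat_exp_vec_deriv[OF MT x0 i, of s] unfolding wt_def by simp
      qed
      then show "((\<lambda>s. wt i s) has_vector_derivative (\<Sum>l<n. AR l i * wt l s)) (at s within {0..t})"
        by (simp add: has_real_derivative_iff_has_vector_derivative has_vector_derivative_at_within)
    qed
    moreover have "wt i 0 = x0 $ i" unfolding wt_def using mat_exp_zero_vec[OF MT x0] by simp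
    ultimately show ?thesis by simp
  qed
  define dv where "dv l = (if l < n then a (n-l) - c (n-l) else 0)" for l
  define bv where "bv l = (if l < n then - b (n-l) else 0)" for l
  have dv0: "\<And>l. l \<ge> n \<Longrightarrow> dv l = 0" and bv0: "\<And>l. l \<ge> n \<Longrightarrow> bv l = 0"
    unfolding dv_def bv_def by auto
  define K where "K = bez n c dv"
  define J where "J = bez n c bv"
  define W where "W i s = X i s + (\<Sum>j<n. K i j * Mu j s) + (\<Sum>j<n. J i j * Z j s)" for i s
  have HW: "((\<lambda>s. \<Sum>l<n. AR l i * W l s) has_integral (W i t - x0 $ i)) {0..t}"
    if t: "t \<in> {0..T}" and i: "i < n" for t i
  proof -
    have "((\<lambda>s. ((\<Sum>l<n. plant_A n a $$ (i,l) * X l s) + u s * b (n-i))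
        + (\<Sum>j<n. K i j * ((\<Sum>l<n. comp_mat n c $$ (j,l) * Mu l s) + (if j = n-1 then X (n-1) s else 0)))
        + (\<Sum>j<n. J i j * ((\<Sum>l<n. comp_mat n c $$ (j,l) * Z l s) + (if j = n-1 then u s else 0))))
        has_integral ((X i t - x0 $ i) + (\<Sum>j<n. K i j * Mu j t) + (\<Sum>j<n. J i j * Z j t))) {0..t}"
      by (intro has_integral_add has_integral_sum has_integral_mult_right HX HZ HMu t i) auto
    moreover have "((\<Sum>l<n. plant_A n a $$ (i,l) * X l s) + u s * b (n-i))
        + (\<Sum>j<n. K i j * ((\<Sum>l<n. comp_mat n c $$ (j,l) * Mu l s) + (if j = n-1 then X (n-1) s else 0)))
        + (\<Sum>j<n. J i j * ((\<Sum>l<n. comp_mat n c $$ (j,l) * Z l s) + (if j = n-1 then u s else 0)))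
        = (\<Sum>l<n. AR l i * W l s)" for s
    proof -
      have a1: "(\<Sum>l<n. plant_A n a $$ (i,l) * X l s) + K i (n-1) * X (n-1) s = (\<Sum>l<n. AR l i * X l s)"
      proof -
        have "K i (n-1) = dv i" unfolding K_def by (rule bez_c1[OF dv0 i])
        have "(\<Sum>l<n. plant_A n a $$ (i,l) * X l s) + K i (n-1) * X (n-1) s
            = (\<Sum>l<n. (plant_A n a $$ (i,l) + (if l = n-1 then dv i else 0)) * X l s)"
          using n1 \<open>K i (n-1) = dv i\<close> by (simp add: distrib_right sum.distrib sum_if_last[OF n1]
              if_distrib[of "\<lambda>z. z * X _ s"] sum.delta' cong: if_cong)
        also have "\<dots> = (\<Sum>l<n. AR l i * X l s)"
          by (intro sum.cong refl) (use i in \<open>auto simp: plant_A_entry AR_def comp_mat_entry dv_def gam_def\<close>)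
        finally show ?thesis .
      qed
      have a2: "u s * b (n-i) + J i (n-1) * u s = 0"
        using bez_c1[OF bv0 i, where c=c] i unfolding J_def bv_def by simp
      have a3: "(\<Sum>j<n. K i j * (\<Sum>l<n. AR j l * Mu l s)) = (\<Sum>l<n. AR l i * (\<Sum>j<n. K l j * Mu j s))"
        by (rule sum_comm_lemma[OF _ i]) (simp add: K_def AR_def bez_comm[OF dv0])
      have a4: "(\<Sum>j<n. J i j * (\<Sum>l<n. AR j l * Z l s)) = (\<Sum>l<n. AR l i * (\<Sum>j<n. J l j * Z j s))"
        by (rule sum_comm_lemma[OF _ i]) (simp add: J_def AR_def bez_comm[OF bv0])
      have "(\<Sum>j<n. K i j * ((\<Sum>l<n. comp_mat n c $$ (j,l) * Mu l s) + (if j = n-1 then X (n-1) s else 0)))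
          = (\<Sum>j<n. K i j * (\<Sum>l<n. AR j l * Mu l s)) + K i (n-1) * X (n-1) s"
        unfolding AR_def distrib_left sum.distrib sum_if_last[OF n1] ..
      moreover have "(\<Sum>j<n. J i j * ((\<Sum>l<n. comp_mat n c $$ (j,l) * Z l s) + (if j = n-1 then u s else 0)))
          = (\<Sum>j<n. J i j * (\<Sum>l<n. AR j l * Z l s)) + J i (n-1) * u s"
        unfolding AR_def distrib_left sum.distrib sum_if_last[OF n1] ..
      moreover have "(\<Sum>l<n. AR l i * W l s) = (\<Sum>l<n. AR l i * X l s)
          + (\<Sum>l<n. AR l i * (\<Sum>j<n. K l j * Mu j s)) + (\<Sum>l<n. AR l i * (\<Sum>j<n. J l j * Z j s))"
        unfolding W_def distrib_left sum.distrib ..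
      ultimately show ?thesis using a1 a2 a3 a4 by simp
    qed
    ultimately show ?thesis unfolding W_def by (simp add: algebra_simps)
  qed
  define D where "D i s = W i s - wt i s" for i s
  have HD: "((\<lambda>s. \<Sum>l<n. AR l i * D l s) has_integral D i t) {0..t}"
    if t: "t \<in> {0..T}" and i: "i < n" for t i
    using has_integral_diff[OF HW[OF t i] Hw[OF t i]]
    unfolding D_def by (simp add: right_diff_distrib sum_subtractf)
  have "D (n-1) t = 0"
    by (rule lin_unique[of T n "\<lambda>i j. AR j i" D]) (use HD t n1 in auto)
  moreover have "W (n-1) t = X (n-1) t + (\<Sum>l<n. (a (n-l) - c (n-l)) * Mu l t) - (\<Sum>l<n. b (n-l) * Z l t)"
  proof -
    have "(\<Sum>j<n. K (n-1) j * Mu j t) = (\<Sum>l<n. (a (n-l) - c (n-l)) * Mu l t)"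
    proof (intro sum.cong refl)
      fix l assume "l \<in> {..<n}"
      then have l: "l < n" by simp
      show "K (n-1) l * Mu l t = (a (n-l) - c (n-l)) * Mu l t"
      proof -
        have "bez n c dv (n-1) l = dv l" by (rule bez_c3[OF dv0 l])
        then show ?thesis unfolding K_def using l by (simp add: dv_def)
      qed
    qed
    moreover have "(\<Sum>j<n. J (n-1) j * Z j t) = - (\<Sum>l<n. b (n-l) * Z l t)"
    proof -
      have "(\<Sum>j<n. J (n-1) j * Z j t) = (\<Sum>l<n. - (b (n-l) * Z l t))"
      proof (intro sum.cong refl)
        fix l assume "l \<in> {..<n}"
        then have l: "l < n" by simp
        show "J (n-1) l * Z l t = - (b (n-l) * Z l t)"
        proof -
          have "bez n c bv (n-1) l = bv l" by (rule bez_c3[OF bv0 l])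
          then show ?thesis unfolding J_def using l by (simp add: bv_def)
        qed
      qed
      then show ?thesis by (simp add: sum_negf)
    qed
    ultimately show ?thesis unfolding W_def by simp
  qed
  ultimately show ?thesis unfolding D_def wt_def MT_def by simp
qed

lemma comp_mat_carrier: "comp_mat n c \<in> carrier_mat n n"
  unfolding comp_mat_def by auto

lemma inv_exists:
  assumes n1: "n \<ge> 1" and A2: "\<not> eigenvalue (comp_mat n c) (- \<beta>)"
  shows "\<exists>Ni. mat_inverse (transpose_mat (comp_mat n c) + \<beta> \<cdot>\<^sub>m 1\<^sub>m n) = Some Ni"
proof -
  define C where "C = comp_mat n c"
  have C: "C \<in> carrier_mat n n" unfolding C_def by (rule comp_mat_carrier)
  define X where "X = transpose_mat C + \<beta> \<cdot>\<^sub>m 1\<^sub>m n"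
  have X: "X \<in> carrier_mat n n" unfolding X_def using C by auto
  have XT: "transpose_mat X = C + \<beta> \<cdot>\<^sub>m 1\<^sub>m n"
    unfolding X_def using C by (intro eq_matI) auto
  have "Determinant.det X \<noteq> 0"
  proof
    assume "Determinant.det X = 0"
    then have "Determinant.det (transpose_mat X) = 0" using Determinant.det_transpose[OF X] by simp
    then obtain v where v: "v \<in> carrier_vec n" "v \<noteq> 0\<^sub>v n" "transpose_mat X *\<^sub>v v = 0\<^sub>v n"
      using det_0_iff_vec_prod_zero_field[of "transpose_mat X" n] X by auto
    have "C *\<^sub>v v = (- \<beta>) \<cdot>\<^sub>v v"
    proof (rule eq_vecI)
      fix i assume "i < dim_vec ((- \<beta>) \<cdot>\<^sub>v v)"
      then have i: "i < n" using v by simp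
      have "(transpose_mat X *\<^sub>v v) $ i = (C *\<^sub>v v) $ i + \<beta> * v $ i"
        unfolding XT using C v i
        by (simp add: add_mult_distrib_mat_vec[of C n n "\<beta> \<cdot>\<^sub>m 1\<^sub>m n" v])
      then show "(C *\<^sub>v v) $ i = ((- \<beta>) \<cdot>\<^sub>v v) $ i" using v i by simp
    qed (use C v in simp)
    then have "eigenvalue C (- \<beta>)"
      unfolding eigenvalue_def eigenvector_def using v C by auto
    then show False using A2 unfolding C_def by simp
  qed
  then have "X \<in> Units (ring_mat TYPE(real) n undefined)" by (rule det_non_zero_imp_unit[OF X])
  then show ?thesis using mat_inverse(1)[OF X] unfolding X_def C_def by (metis option.exhaust)
qed

lemma eps_entry:
  assumes n1: "n \<ge> 1" and x0: "x0 \<in> carrier_vec n"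
    and Ni: "mat_inverse (transpose_mat (comp_mat n c) + \<beta> \<cdot>\<^sub>m 1\<^sub>m n) = Some Ni"
    and r: "r < 2 * n"
  shows "eps n c \<beta> x0 t $ r = (if r = 2*n-1 then
     (\<Sum>j<n. Ni $$ (n-1,j) * ((mat_exp (transpose_mat (comp_mat n c)) t *\<^sub>v x0) $ j - exp (- \<beta> * t) * x0 $ j))
     else 0)"
proof -
  define MT where "MT = transpose_mat (comp_mat n c)"
  have MT: "MT \<in> carrier_mat n n" unfolding MT_def using comp_mat_carrier by auto
  have Nic: "Ni \<in> carrier_mat n n"
    using mat_inverse(2)[OF _ Ni] MT unfolding MT_def by auto
  have Gf: "G_f n \<in> carrier_mat (2*n) n" unfolding G_f_def by auto
  define v where "v = (mat_exp MT t - exp (- \<beta> * t) \<cdot>\<^sub>m 1\<^sub>m n) *\<^sub>v x0"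
  have v: "v \<in> carrier_vec n" unfolding v_def using MT mat_exp_carrier[OF MT] x0
    by (intro mult_mat_vec_carrier[of _ n n]) auto
  have ve: "v $ j = (mat_exp MT t *\<^sub>v x0) $ j - exp (- \<beta> * t) * x0 $ j" if j: "j < n" for j
  proof -
    have "v = mat_exp MT t *\<^sub>v x0 - (exp (- \<beta> * t) \<cdot>\<^sub>m 1\<^sub>m n) *\<^sub>v x0"
      unfolding v_def using mat_exp_carrier[OF MT] x0
      by (intro minus_mult_distrib_mat_vec[of _ n n]) auto
    then show ?thesis using j x0 mat_exp_carrier[OF MT] by simp
  qed
  have "eps n c \<beta> x0 t = G_f n *\<^sub>v (Ni *\<^sub>v v)"
    unfolding eps_def Gamma_star_def Ni option.sel using Gf Nic v by (simp add: v_def MT_def)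
  moreover have "(G_f n *\<^sub>v w) $ r = (if r = 2*n-1 then w $ (n-1) else 0)" if w: "w \<in> carrier_vec n" for w
  proof -
    have "(G_f n *\<^sub>v w) $ r = (\<Sum>l<n. G_f n $$ (r,l) * w $ l)" by (rule mat_vec_entry[OF Gf w r])
    also have "\<dots> = (\<Sum>l<n. if l = n-1 then (if r = 2*n-1 then w $ l else 0) else 0)"
      using r by (intro sum.cong refl) (auto simp: G_f_def)
    also have "\<dots> = (if r = 2*n-1 then w $ (n-1) else 0)" using n1 by (simp add: sum.delta')
    finally show ?thesis .
  qed
  moreover have "(Ni *\<^sub>v v) $ (n-1) = (\<Sum>j<n. Ni $$ (n-1,j) * v $ j)"
    using mat_vec_entry[OF Nic v] n1 by simp
  ultimately show ?thesis using Nic v ve by (simp add: MT_def)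
qed

definition epsE :: "nat \<Rightarrow> (nat \<Rightarrow> real) \<Rightarrow> real \<Rightarrow> real mat \<Rightarrow> real Matrix.vec \<Rightarrow> real \<Rightarrow> real" where
  "epsE n c \<beta> Ni x0 s = (\<Sum>j<n. Ni $$ (n-1,j) * ((mat_exp (transpose_mat (comp_mat n c)) s *\<^sub>v x0) $ j - exp (- \<beta> * s) * x0 $ j))"

lemma eps_int:
  assumes n1: "n \<ge> 1" and x0: "x0 \<in> carrier_vec n"
    and Ni: "mat_inverse (transpose_mat (comp_mat n c) + \<beta> \<cdot>\<^sub>m 1\<^sub>m n) = Some Ni"
    and t: "0 \<le> t"
  shows "((\<lambda>s. (mat_exp (transpose_mat (comp_mat n c)) s *\<^sub>v x0) $ (n-1) - \<beta> * epsE n c \<beta> Ni x0 s)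
     has_integral epsE n c \<beta> Ni x0 t) {0..t}"
proof -
  define MT where "MT = transpose_mat (comp_mat n c)"
  have MT: "MT \<in> carrier_mat n n" unfolding MT_def using comp_mat_carrier by auto
  define X where "X = MT + \<beta> \<cdot>\<^sub>m 1\<^sub>m n"
  have X: "X \<in> carrier_mat n n" unfolding X_def using MT by auto
  have Nic: "Ni \<in> carrier_mat n n" and NiX: "Ni * X = 1\<^sub>m n"
    using mat_inverse(2)[OF X] Ni unfolding X_def MT_def by auto
  define wv where "wv s = mat_exp MT s *\<^sub>v x0" for s
  have wv: "wv s \<in> carrier_vec n" for s unfolding wv_def using mat_exp_carrier[OF MT] x0
    by (intro mult_mat_vec_carrier[of _ n n]) auto
  define f where "f s = epsE n c \<beta> Ni x0 s" for s
  define f' where "f' s = (\<Sum>j<n. Ni $$ (n-1,j) * ((\<Sum>l<n. MT $$ (j,l) * wv s $ l) - exp (- \<beta> * s) * (- \<beta>) * x0 $ j))" for s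
  have der: "(f has_real_derivative f' s) (at s)" for s
    unfolding f_def f'_def epsE_def MT_def[symmetric] wv_def
    by (rule DERIV_sum, rule DERIV_cmult, rule DERIV_diff, rule mat_exp_vec_deriv[OF MT x0])
       (auto intro!: derivative_eq_intros)
  have f'eq: "f' s = wv s $ (n-1) - \<beta> * f s" for s
  proof -
    have Xe: "(X *\<^sub>v wv s) $ j = (\<Sum>l<n. MT $$ (j,l) * wv s $ l) + \<beta> * wv s $ j" if j: "j < n" for j
    proof -
      have "(X *\<^sub>v wv s) $ j = (MT *\<^sub>v wv s) $ j + ((\<beta> \<cdot>\<^sub>m 1\<^sub>m n) *\<^sub>v wv s) $ j"
        unfolding X_def using MT wv j by (simp add: add_mult_distrib_mat_vec[of MT n n])
      then show ?thesis using mat_vec_entry[OF MT wv j] wv j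
        by (simp add: smult_scalar_prod_distrib[of _ n] scalar_prod_left_unit)
    qed
    have "f' s + \<beta> * f s = (\<Sum>j<n. Ni $$ (n-1,j) * (X *\<^sub>v wv s) $ j)"
    proof -
      have "f' s + \<beta> * f s = (\<Sum>j<n. Ni $$ (n-1,j) * ((\<Sum>l<n. MT $$ (j,l) * wv s $ l) - exp (- \<beta> * s) * (- \<beta>) * x0 $ j)
          + \<beta> * (Ni $$ (n-1,j) * (wv s $ j - exp (- \<beta> * s) * x0 $ j)))"
        unfolding f'_def f_def epsE_def MT_def[symmetric] wv_def[symmetric] sum_distrib_left sum.distrib ..
      also have "\<dots> = (\<Sum>j<n. Ni $$ (n-1,j) * (X *\<^sub>v wv s) $ j)"
      proof (intro sum.cong refl)
        fix j assume "j \<in> {..<n}"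
        then have j: "j < n" by simp
        show "Ni $$ (n-1,j) * ((\<Sum>l<n. MT $$ (j,l) * wv s $ l) - exp (- \<beta> * s) * (- \<beta>) * x0 $ j)
          + \<beta> * (Ni $$ (n-1,j) * (wv s $ j - exp (- \<beta> * s) * x0 $ j)) = Ni $$ (n-1,j) * (X *\<^sub>v wv s) $ j"
          unfolding Xe[OF j] by (simp add: algebra_simps)
      qed
      finally show ?thesis .
    qed
    also have "\<dots> = (Ni *\<^sub>v (X *\<^sub>v wv s)) $ (n-1)"
      using mat_vec_entry[OF Nic _, of "X *\<^sub>v wv s" "n-1"] X wv n1 by simp
    also have "\<dots> = wv s $ (n-1)"
      using NiX Nic X wv n1 by (simp add: assoc_mult_mat_vec[symmetric, of Ni n n X n "wv s"])
    finally show ?thesis by simp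
  qed
  have "(f' has_integral (f t - f 0)) {0..t}"
  proof (rule fundamental_theorem_of_calculus[OF t])
    fix s assume "s \<in> {0..t}"
    show "(f has_vector_derivative f' s) (at s within {0..t})"
      using der[of s] by (simp add: has_real_derivative_iff_has_vector_derivative has_vector_derivative_at_within)
  qed
  moreover have "f 0 = 0"
    unfolding f_def epsE_def MT_def[symmetric] using mat_exp_zero_vec[OF MT x0] by simp
  ultimately have "(f' has_integral f t) {0..t}" by simp
  moreover have "f' = (\<lambda>s. wv s $ (n-1) - \<beta> * f s)" using f'eq by auto
  ultimately show ?thesis unfolding f_def wv_def MT_def by simp
qed

lemma sum_split_add:
  fixes f :: "nat \<Rightarrow> real"
  shows "(\<Sum>l<n+m. f l) = (\<Sum>l<n. f l) + (\<Sum>l<m. f (n+l))"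
  by (induct m) (auto simp: sum.lessThan_Suc)

lemma has_integral_if_const:
  "(f has_integral y) S \<Longrightarrow> ((\<lambda>s. if P then f s else 0) has_integral (if P then y else (0::real))) S"
  by (cases P) auto

lemma scalar_unique:
  fixes R :: "real \<Rightarrow> real"
  assumes H: "\<And>t. t \<in> {0..T} \<Longrightarrow> ((\<lambda>s. k * R s) has_integral R t) {0..t}" and t: "t \<in> {0..T}"
  shows "R t = 0"
  using lin_unique[of T 1 "\<lambda>_ _. k" "\<lambda>_. R" t 0] H t by auto

lemma sum_lin:
  fixes A p z :: "nat \<Rightarrow> real"
  shows "(\<Sum>l<n. A l * (k * p l + z l)) = k * (\<Sum>l<n. A l * p l) + (\<Sum>l<n. A l * z l)"
  by (simp add: sum_distrib_left sum.distrib algebra_simps)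

lemma core_top:
  fixes Z P :: "nat \<Rightarrow> real \<Rightarrow> real" and U u :: "real \<Rightarrow> real"
  assumes n1: "n \<ge> 1"
    and HZ: "\<And>t i. t \<in> {0..T} \<Longrightarrow> i < n \<Longrightarrow>
      ((\<lambda>s. (\<Sum>l<n. comp_mat n c $$ (i,l) * Z l s) + (if i = n-1 then u s else 0)) has_integral Z i t) {0..t}"
    and HP: "\<And>t k. t \<in> {0..T} \<Longrightarrow> k < n \<Longrightarrow>
      ((\<lambda>s. -\<beta> * P k s + Z k s) has_integral P k t) {0..t}"
    and HU: "\<And>t. t \<in> {0..T} \<Longrightarrow> ((\<lambda>s. -\<beta> * U s + u s) has_integral U t) {0..t}"
    and r: "r < n" and t: "t \<in> {0..T}"
  shows "Z r t - \<beta> * P r t = (\<Sum>l<n. comp_mat n c $$ (r,l) * P l t) + (if r = n-1 then U t else 0)"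
proof -
  define R where "R s = Z r s - \<beta> * P r s - (\<Sum>l<n. comp_mat n c $$ (r,l) * P l s) - (if r = n-1 then U s else 0)" for s
  have "((\<lambda>s. -\<beta> * R s) has_integral R t) {0..t}" if t: "t \<in> {0..T}" for t
  proof -
    have "((\<lambda>s. ((\<Sum>l<n. comp_mat n c $$ (r,l) * Z l s) + (if r = n-1 then u s else 0))
        - \<beta> * (-\<beta> * P r s + Z r s) - (\<Sum>l<n. comp_mat n c $$ (r,l) * (-\<beta> * P l s + Z l s))
        - (if r = n-1 then -\<beta> * U s + u s else 0)) has_integral R t) {0..t}"
      unfolding R_def
      by (intro has_integral_diff has_integral_mult_right has_integral_sum has_integral_if_const HZ HP HU t r)
         auto
    moreover have "((\<Sum>l<n. comp_mat n c $$ (r,l) * Z l s) + (if r = n-1 then u s else 0))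
        - \<beta> * (-\<beta> * P r s + Z r s) - (\<Sum>l<n. comp_mat n c $$ (r,l) * (-\<beta> * P l s + Z l s))
        - (if r = n-1 then -\<beta> * U s + u s else 0) = -\<beta> * R s" for s
      unfolding R_def sum_lin by (simp add: algebra_simps)
    ultimately show ?thesis by simp
  qed
  then have "R t = 0" by (rule scalar_unique[OF _ t])
  then show ?thesis unfolding R_def by simp
qed

lemma core_bot:
  fixes X Z Mu P :: "nat \<Rightarrow> real \<Rightarrow> real" and E :: "real \<Rightarrow> real"
  assumes n1: "n \<ge> 1"
    and HMu: "\<And>t i. t \<in> {0..T} \<Longrightarrow> i < n \<Longrightarrow>
      ((\<lambda>s. (\<Sum>l<n. comp_mat n c $$ (i,l) * Mu l s) + (if i = n-1 then X (n-1) s else 0)) has_integral Mu i t) {0..t}"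
    and HP: "\<And>t k. t \<in> {0..T} \<Longrightarrow> k < n \<Longrightarrow>
      ((\<lambda>s. -\<beta> * P k s + Z k s) has_integral P k t) {0..t}"
    and HP2: "\<And>t k. t \<in> {0..T} \<Longrightarrow> k < n \<Longrightarrow>
      ((\<lambda>s. -\<beta> * P (n+k) s + Mu k s) has_integral P (n+k) t) {0..t}"
    and HE: "\<And>t. t \<in> {0..T} \<Longrightarrow> ((\<lambda>s. (X (n-1) s + (\<Sum>l<n. (a (n-l) - c (n-l)) * Mu l s) - (\<Sum>l<n. b (n-l) * Z l s))
         - \<beta> * E s) has_integral E t) {0..t}"
    and r: "r < n" and t: "t \<in> {0..T}"
  shows "Mu r t - \<beta> * P (n+r) t = (\<Sum>l<n. L_b n b $$ (r,l) * P l t) + (\<Sum>l<n. comp_mat n a $$ (r,l) * P (n+l) t)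
     + (if r = n-1 then E t else 0)"
proof -
  define R where "R s = Mu r s - \<beta> * P (n+r) s - (\<Sum>l<n. L_b n b $$ (r,l) * P l s)
     - (\<Sum>l<n. comp_mat n a $$ (r,l) * P (n+l) s) - (if r = n-1 then E s else 0)" for s
  have key: "(\<Sum>l<n. comp_mat n c $$ (r,l) * Mu l s) + (if r = n-1 then X (n-1) s else 0)
      - (\<Sum>l<n. L_b n b $$ (r,l) * Z l s) - (\<Sum>l<n. comp_mat n a $$ (r,l) * Mu l s)
      - (if r = n-1 then X (n-1) s + (\<Sum>l<n. (a (n-l) - c (n-l)) * Mu l s) - (\<Sum>l<n. b (n-l) * Z l s) else 0) = 0" for s
  proof (cases "r = n-1")
    case True
    have e1: "(\<Sum>l<n. comp_mat n c $$ (r,l) * Mu l s) = (\<Sum>l<n. - c (n-l) * Mu l s)"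
      using True by (intro sum.cong refl) (auto simp: comp_mat_def)
    have e2: "(\<Sum>l<n. comp_mat n a $$ (r,l) * Mu l s) = (\<Sum>l<n. - a (n-l) * Mu l s)"
      using True by (intro sum.cong refl) (auto simp: comp_mat_def)
    have e3: "(\<Sum>l<n. L_b n b $$ (r,l) * Z l s) = (\<Sum>l<n. b (n-l) * Z l s)"
      using True n1 by (intro sum.cong refl) (auto simp: L_b_def)
    show ?thesis unfolding e1 e2 e3 using True
      by (simp add: left_diff_distrib sum_subtractf sum_negf)
  next
    case False
    have e1: "(\<Sum>l<n. comp_mat n c $$ (r,l) * Mu l s) = (\<Sum>l<n. comp_mat n a $$ (r,l) * Mu l s)"
      using False r by (intro sum.cong refl) (auto simp: comp_mat_def)
    have e3: "(\<Sum>l<n. L_b n b $$ (r,l) * Z l s) = 0"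
      using False r by (intro sum.neutral) (auto simp: L_b_def)
    show ?thesis unfolding e1 e3 using False by simp
  qed
  have "((\<lambda>s. -\<beta> * R s) has_integral R t) {0..t}" if t: "t \<in> {0..T}" for t
  proof -
    have "((\<lambda>s. ((\<Sum>l<n. comp_mat n c $$ (r,l) * Mu l s) + (if r = n-1 then X (n-1) s else 0))
        - \<beta> * (-\<beta> * P (n+r) s + Mu r s) - (\<Sum>l<n. L_b n b $$ (r,l) * (-\<beta> * P l s + Z l s))
        - (\<Sum>l<n. comp_mat n a $$ (r,l) * (-\<beta> * P (n+l) s + Mu l s))
        - (if r = n-1 then (X (n-1) s + (\<Sum>l<n. (a (n-l) - c (n-l)) * Mu l s) - (\<Sum>l<n. b (n-l) * Z l s))
         - \<beta> * E s else 0)) has_integral R t) {0..t}"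
      unfolding R_def
      by (intro has_integral_diff has_integral_mult_right has_integral_sum has_integral_if_const HMu HP HP2 HE t r)
         auto
    moreover have "((\<Sum>l<n. comp_mat n c $$ (r,l) * Mu l s) + (if r = n-1 then X (n-1) s else 0))
        - \<beta> * (-\<beta> * P (n+r) s + Mu r s) - (\<Sum>l<n. L_b n b $$ (r,l) * (-\<beta> * P l s + Z l s))
        - (\<Sum>l<n. comp_mat n a $$ (r,l) * (-\<beta> * P (n+l) s + Mu l s))
        - (if r = n-1 then (X (n-1) s + (\<Sum>l<n. (a (n-l) - c (n-l)) * Mu l s) - (\<Sum>l<n. b (n-l) * Z l s))
         - \<beta> * E s else 0) = -\<beta> * R s" for s
    proof -
      have "(if r = n-1 then (X (n-1) s + (\<Sum>l<n. (a (n-l) - c (n-l)) * Mu l s) - (\<Sum>l<n. b (n-l) * Z l s))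
         - \<beta> * E s else 0) = (if r = n-1 then X (n-1) s + (\<Sum>l<n. (a (n-l) - c (n-l)) * Mu l s) - (\<Sum>l<n. b (n-l) * Z l s) else 0)
         - \<beta> * (if r = n-1 then E s else 0)" by simp
      then show ?thesis using key[of s] unfolding R_def sum_lin by (simp add: algebra_simps)
    qed
    ultimately show ?thesis by simp
  qed
  then have "R t = 0" by (rule scalar_unique[OF _ t])
  then show ?thesis unfolding R_def by simp
qed

lemma append_rows_mult:
  fixes A B W :: "real mat"
  assumes A: "A \<in> carrier_mat m1 k" and B: "B \<in> carrier_mat m2 k" and W: "W \<in> carrier_mat k p"
  shows "(A @\<^sub>r B) * W = (A * W) @\<^sub>r (B * W)"
proof -
  have C1: "(A @\<^sub>r B) \<in> carrier_mat (m1+m2) k" using A B by (intro carrier_append_rows) auto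
  have C2: "(A * W) @\<^sub>r (B * W) \<in> carrier_mat (m1+m2) p" using A B W by (intro carrier_append_rows) auto
  show ?thesis
  proof (rule eq_matI)
    show "dim_row ((A @\<^sub>r B) * W) = dim_row ((A * W) @\<^sub>r (B * W))" using C1 C2 by simp
    show "dim_col ((A @\<^sub>r B) * W) = dim_col ((A * W) @\<^sub>r (B * W))" using C1 C2 W by simp
    fix i j assume i: "i < dim_row ((A * W) @\<^sub>r (B * W))" and j: "j < dim_col ((A * W) @\<^sub>r (B * W))"
    then have i: "i < m1 + m2" and j: "j < p" using C2 by auto
    have r: "Matrix.row (A @\<^sub>r B) i = (if i < m1 then Matrix.row A i else Matrix.row B (i - m1))"
      using A B i by (intro eq_vecI) (auto simp: append_rows_def)
    have "((A @\<^sub>r B) * W) $$ (i, j) = Matrix.row (A @\<^sub>r B) i \<bullet> col W j"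
      using C1 W i j by simp
    also have "\<dots> = (if i < m1 then (A * W) $$ (i,j) else (B * W) $$ (i - m1, j))"
      unfolding r using A B W i j by auto
    also have "\<dots> = ((A * W) @\<^sub>r (B * W)) $$ (i, j)"
      using A B W i j by (simp add: append_rows_def)
    finally show "((A @\<^sub>r B) * W) $$ (i, j) = ((A * W) @\<^sub>r (B * W)) $$ (i, j)" .
  qed
qed

lemma AB_f_carrier: "AB_f n a b c \<in> carrier_mat (2*n) (2*n+1)"
  unfolding AB_f_def by auto

lemma final_assembly:
  fixes \<delta>f \<phi> epsf :: "real \<Rightarrow> real Matrix.vec" and \<upsilon> :: "real \<Rightarrow> real"
  assumes rowid: "\<And>j r. j < N \<Longrightarrow> r < 2*n \<Longrightarrow> \<delta>f (ts (Suc j)) $ r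
      = (\<Sum>l<2*n. A_f n a b c $$ (r,l) * \<phi> (ts (Suc j)) $ l) + B_f n $ r * \<upsilon> (ts (Suc j)) + epsf (ts (Suc j)) $ r"
    and W: "W \<in> carrier_mat N Nbar"
    and E0: "sample_mat (2 * n) N ts epsf * W = 0\<^sub>m (2 * n) Nbar"
    and rk: "vec_space.rank (2 * n + 1)
        ((sample_mat (2 * n) N ts \<phi> * W) @\<^sub>r (sample_mat 1 N ts (\<lambda>t. Matrix.vec 1 (\<lambda>_. \<upsilon> t)) * W)) = 2 * n + 1"
  shows "AB_f n a b c = (sample_mat (2 * n) N ts \<delta>f * W) *
    pinv ((sample_mat (2 * n) N ts \<phi> * W) @\<^sub>r (sample_mat 1 N ts (\<lambda>t. Matrix.vec 1 (\<lambda>_. \<upsilon> t)) * W))"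
proof -
  define Phi where "Phi = sample_mat (2 * n) N ts \<phi>"
  define Ups where "Ups = sample_mat 1 N ts (\<lambda>t. Matrix.vec 1 (\<lambda>_. \<upsilon> t))"
  define Del where "Del = sample_mat (2 * n) N ts \<delta>f"
  define E where "E = sample_mat (2 * n) N ts epsf"
  define AB where "AB = AB_f n a b c"
  have Phi: "Phi \<in> carrier_mat (2*n) N" and Ups: "Ups \<in> carrier_mat 1 N" and Del: "Del \<in> carrier_mat (2*n) N"
    and E: "E \<in> carrier_mat (2*n) N" and AB: "AB \<in> carrier_mat (2*n) (2*n+1)"
    unfolding Phi_def Ups_def Del_def E_def AB_def sample_mat_def AB_f_def by auto
  define M0 where "M0 = Phi @\<^sub>r Ups"
  have M0: "M0 \<in> carrier_mat (2*n+1) N" unfolding M0_def using carrier_append_rows[OF Phi Ups] by simp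
  have DelEq: "Del = AB * M0 + E"
  proof (rule eq_matI)
    fix r j assume r: "r < dim_row (AB * M0 + E)" and j: "j < dim_col (AB * M0 + E)"
    then have r: "r < 2*n" and j: "j < N" using AB M0 E by auto
    have "(AB * M0) $$ (r,j) = (\<Sum>l<2*n+1. AB $$ (r,l) * M0 $$ (l,j))"
      using AB M0 r j by (simp add: scalar_prod_def atLeast0LessThan)
    also have "\<dots> = (\<Sum>l<2*n. A_f n a b c $$ (r,l) * \<phi> (ts (Suc j)) $ l) + B_f n $ r * \<upsilon> (ts (Suc j))"
    proof -
      have "(\<Sum>l<2*n+1. AB $$ (r,l) * M0 $$ (l,j)) = (\<Sum>l<2*n. AB $$ (r,l) * M0 $$ (l,j)) + AB $$ (r,2*n) * M0 $$ (2*n,j)"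
        by simp
      also have "(\<Sum>l<2*n. AB $$ (r,l) * M0 $$ (l,j)) = (\<Sum>l<2*n. A_f n a b c $$ (r,l) * \<phi> (ts (Suc j)) $ l)"
        using r j Phi Ups by (intro sum.cong refl) (auto simp: AB_def AB_f_def M0_def Phi_def Ups_def append_rows_def sample_mat_def)
      also have "AB $$ (r,2*n) * M0 $$ (2*n,j) = B_f n $ r * \<upsilon> (ts (Suc j))"
        using r j Phi Ups by (auto simp: AB_def AB_f_def M0_def Phi_def Ups_def append_rows_def sample_mat_def)
      finally show ?thesis .
    qed
    finally show "Del $$ (r,j) = (AB * M0 + E) $$ (r,j)"
      using r j AB M0 E rowid[OF j r] by (simp add: Del_def E_def sample_mat_def)
  qed (use Del AB M0 E in auto)
  define M where "M = (Phi * W) @\<^sub>r (Ups * W)"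
  have M: "M \<in> carrier_mat (2*n+1) Nbar" unfolding M_def
    using carrier_append_rows[of "Phi * W" "2*n" Nbar "Ups * W" 1] Phi Ups W by simp
  have M0W: "M0 * W = M" unfolding M0_def M_def by (rule append_rows_mult[OF Phi Ups W])
  have "Del * W = AB * M0 * W + E * W"
    unfolding DelEq using AB M0 E W by (simp add: add_mult_distrib_mat[of _ "2*n" N])
  also have "E * W = 0\<^sub>m (2*n) Nbar" using E0 unfolding E_def .
  also have "AB * M0 * W = AB * M" using AB M0 W M0W by simp
  finally have DW: "Del * W = AB * M" using AB M by simp
  have "M * pinv M = 1\<^sub>m (2*n+1) \<and> pinv M \<in> carrier_mat Nbar (2*n+1)"
    by (rule pinv_right_inverse[OF M]) (use rk in \<open>simp add: M_def Phi_def Ups_def\<close>)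
  then have MP: "M * pinv M = 1\<^sub>m (2*n+1)" and Pc: "pinv M \<in> carrier_mat Nbar (2*n+1)" by auto
  have "AB = AB * (M * pinv M)" using MP AB by simp
  also have "\<dots> = (AB * M) * pinv M" using AB M Pc by simp
  finally have "AB = Del * W * pinv M" using DW by simp
  then show ?thesis unfolding AB_def Del_def M_def Phi_def Ups_def .
qed

theorem mainTheorem6:
  fixes n N Nbar :: nat
    and a b c :: "nat \<Rightarrow> real" and \<beta> :: real
    and x0 :: "real Matrix.vec" and u :: "real \<Rightarrow> real" and ts :: "nat \<Rightarrow> real"
    and x \<zeta> \<mu> \<phi> :: "real \<Rightarrow> real Matrix.vec" and \<upsilon> :: "real \<Rightarrow> real"
    and W :: "real mat"
  assumes n_pos: "n \<ge> 1" and N_pos: "N \<ge> 1"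
    and x0_dim: "x0 \<in> carrier_vec n"
    and t_pos: "0 < ts 1" and t_incr: "\<forall>k\<in>{1..<N}. ts k < ts (Suc k)"
    and u_int: "u absolutely_integrable_on {0..ts N}"
    and plant: "solves_ode (ts N) (plant_A n a) (\<lambda>s. u s \<cdot>\<^sub>v plant_B n b) x0 x"
    and zeta: "solves_ode (ts N) (comp_mat n c) (\<lambda>s. u s \<cdot>\<^sub>v B_r n) (0\<^sub>v n) \<zeta>"
    and mu: "solves_ode (ts N) (comp_mat n c) (\<lambda>s. ((plant_C n *\<^sub>v x s) $ 0) \<cdot>\<^sub>v B_r n) (0\<^sub>v n) \<mu>"
    and phi: "solves_ode (ts N) ((- \<beta>) \<cdot>\<^sub>m 1\<^sub>m (2 * n)) (\<lambda>s. \<zeta> s @\<^sub>v \<mu> s) (0\<^sub>v (2 * n)) \<phi>"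
    and ups: "\<forall>t\<in>{0..ts N}. ((\<lambda>s. - \<beta> * \<upsilon> s + u s) has_integral \<upsilon> t) {0..t}"
    and A1: "coprime (monom 1 n + (\<Sum>k=1..n. monom (a k) (n - k))) (\<Sum>k=1..n. monom (b k) (n - k))"
    and A2: "\<not> eigenvalue (comp_mat n c) (- \<beta>)"
    and W_dim: "W \<in> carrier_mat N Nbar"
    and A3_E: "sample_mat (2 * n) N ts (eps n c \<beta> x0) * W = 0\<^sub>m (2 * n) Nbar"
    and A3_rank: "vec_space.rank (2 * n + 1)
        ((sample_mat (2 * n) N ts \<phi> * W) @\<^sub>r (sample_mat 1 N ts (\<lambda>t. Matrix.vec 1 (\<lambda>_. \<upsilon> t)) * W))
        = 2 * n + 1"
  shows "AB_f n a b c =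
    (sample_mat (2 * n) N ts (\<lambda>t. (\<zeta> t @\<^sub>v \<mu> t) - \<beta> \<cdot>\<^sub>v \<phi> t) * W) *
    pinv ((sample_mat (2 * n) N ts \<phi> * W) @\<^sub>r (sample_mat 1 N ts (\<lambda>t. Matrix.vec 1 (\<lambda>_. \<upsilon> t)) * W))"
proof -
  define T where "T = ts N"
  have tsk: "0 < ts k \<and> ts k \<le> ts N" if "1 \<le> k" "k \<le> N" for k
  proof -
    have mono: "ts k \<le> ts (k + d)" if "1 \<le> k" "k + d \<le> N" for k d
      using that
    proof (induct d)
      case 0 then show ?case by simp
    next
      case (Suc d)
      then have "ts k \<le> ts (k + d)" by simp
      moreover have "ts (k + d) < ts (Suc (k + d))" using t_incr Suc.prems by auto
      ultimately show ?case by simp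
    qed
    have "ts 1 \<le> ts k" using mono[of 1 "k - 1"] that by simp
    moreover have "ts k \<le> ts N" using mono[of k "N - k"] that by simp
    ultimately show ?thesis using t_pos by simp
  qed
  have T0: "0 \<le> T" unfolding T_def using tsk[of N] N_pos by simp
  have PA: "plant_A n a \<in> carrier_mat n n" unfolding plant_A_def by auto
  have CR: "comp_mat n c \<in> carrier_mat n n" by (rule comp_mat_carrier)
  have pl: "\<And>t. t \<in> {0..T} \<Longrightarrow> dim_vec (x t) = n \<and> (\<forall>i<n. ((\<lambda>s. (plant_A n a *\<^sub>v x s + u s \<cdot>\<^sub>v plant_B n b) $ i) has_integral (x t $ i - x0 $ i)) {0..t})"
    using plant unfolding solves_ode_def T_def using PA by auto
  have ze: "\<And>t. t \<in> {0..T} \<Longrightarrow> dim_vec (\<zeta> t) = n \<and> (\<forall>i<n. ((\<lambda>s. (comp_mat n c *\<^sub>v \<zeta> s + u s \<cdot>\<^sub>v B_r n) $ i) has_integral (\<zeta> t $ i - 0\<^sub>v n $ i)) {0..t})"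
    using zeta unfolding solves_ode_def T_def using CR by auto
  have mue: "\<And>t. t \<in> {0..T} \<Longrightarrow> dim_vec (\<mu> t) = n \<and> (\<forall>i<n. ((\<lambda>s. (comp_mat n c *\<^sub>v \<mu> s + ((plant_C n *\<^sub>v x s) $ 0) \<cdot>\<^sub>v B_r n) $ i) has_integral (\<mu> t $ i - 0\<^sub>v n $ i)) {0..t})"
    using mu unfolding solves_ode_def T_def using CR by auto
  have phe: "\<And>t. t \<in> {0..T} \<Longrightarrow> dim_vec (\<phi> t) = 2*n \<and> (\<forall>i<2*n. ((\<lambda>s. ((- \<beta>) \<cdot>\<^sub>m 1\<^sub>m (2 * n) *\<^sub>v \<phi> s + (\<zeta> s @\<^sub>v \<mu> s)) $ i) has_integral (\<phi> t $ i - 0\<^sub>v (2*n) $ i)) {0..t})"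
    using phi unfolding solves_ode_def T_def by auto
  define X where "X i s = x s $ i" for i s
  define Z where "Z i s = \<zeta> s $ i" for i s
  define Mu where "Mu i s = \<mu> s $ i" for i s
  define P where "P i s = \<phi> s $ i" for i s
  have sub: "s \<in> {0..T}" if "t \<in> {0..T}" "s \<in> {0..t}" for s t using that by auto
  have xc: "x s \<in> carrier_vec n" if "s \<in> {0..T}" for s using pl[OF that] unfolding carrier_vec_def by blast
  have zc: "\<zeta> s \<in> carrier_vec n" if "s \<in> {0..T}" for s using ze[OF that] unfolding carrier_vec_def by blast
  have mc: "\<mu> s \<in> carrier_vec n" if "s \<in> {0..T}" for s using mue[OF that] unfolding carrier_vec_def by blast
  have pc: "\<phi> s \<in> carrier_vec (2*n)" if "s \<in> {0..T}" for s using phe[OF that] unfolding carrier_vec_def by blast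
  have Cx: "(plant_C n *\<^sub>v x s) $ 0 = X (n-1) s" if "s \<in> {0..T}" for s
  proof -
    have "(plant_C n *\<^sub>v x s) $ 0 = (\<Sum>l<n. plant_C n $$ (0,l) * x s $ l)"
      by (rule mat_vec_entry[OF _ xc[OF that]]) (auto simp: plant_C_def)
    also have "\<dots> = (\<Sum>l<n. if l = n-1 then x s $ l else 0)"
      by (intro sum.cong refl) (auto simp: plant_C_def)
    finally show ?thesis unfolding X_def using n_pos by (simp add: sum.delta')
  qed
  have HX: "((\<lambda>s. (\<Sum>l<n. plant_A n a $$ (i,l) * X l s) + u s * b (n-i)) has_integral (X i t - x0 $ i)) {0..t}"
    if t: "t \<in> {0..T}" and i: "i < n" for t i
  proof -
    have A: "((\<lambda>s. (plant_A n a *\<^sub>v x s + u s \<cdot>\<^sub>v plant_B n b) $ i) has_integral (x t $ i - x0 $ i)) {0..t}"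
      using pl[OF t] i by blast
    have B: "(plant_A n a *\<^sub>v x s + u s \<cdot>\<^sub>v plant_B n b) $ i = (\<Sum>l<n. plant_A n a $$ (i,l) * X l s) + u s * b (n-i)"
      if s: "s \<in> {0..t}" for s
      using mat_vec_entry[OF PA xc[OF sub[OF t s]] i] PA i unfolding X_def by (simp add: plant_B_def)
    show ?thesis using has_integral_eq[OF B A] unfolding X_def .
  qed
  have HZ: "((\<lambda>s. (\<Sum>l<n. comp_mat n c $$ (i,l) * Z l s) + (if i = n-1 then u s else 0)) has_integral Z i t) {0..t}"
    if t: "t \<in> {0..T}" and i: "i < n" for t i
  proof -
    have A: "((\<lambda>s. (comp_mat n c *\<^sub>v \<zeta> s + u s \<cdot>\<^sub>v B_r n) $ i) has_integral (\<zeta> t $ i)) {0..t}"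
      using ze[OF t] i by simp
    have B: "(comp_mat n c *\<^sub>v \<zeta> s + u s \<cdot>\<^sub>v B_r n) $ i = (\<Sum>l<n. comp_mat n c $$ (i,l) * Z l s) + (if i = n-1 then u s else 0)"
      if s: "s \<in> {0..t}" for s
      using mat_vec_entry[OF CR zc[OF sub[OF t s]] i] CR i unfolding Z_def by (simp add: B_r_def)
    show ?thesis using has_integral_eq[OF B A] unfolding Z_def .
  qed
  have HMu: "((\<lambda>s. (\<Sum>l<n. comp_mat n c $$ (i,l) * Mu l s) + (if i = n-1 then X (n-1) s else 0)) has_integral Mu i t) {0..t}"
    if t: "t \<in> {0..T}" and i: "i < n" for t i
  proof -
    have A: "((\<lambda>s. (comp_mat n c *\<^sub>v \<mu> s + ((plant_C n *\<^sub>v x s) $ 0) \<cdot>\<^sub>v B_r n) $ i) has_integral (\<mu> t $ i)) {0..t}"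
      using mue[OF t] i by simp
    have B: "(comp_mat n c *\<^sub>v \<mu> s + ((plant_C n *\<^sub>v x s) $ 0) \<cdot>\<^sub>v B_r n) $ i
        = (\<Sum>l<n. comp_mat n c $$ (i,l) * Mu l s) + (if i = n-1 then X (n-1) s else 0)"
      if s: "s \<in> {0..t}" for s
      using mat_vec_entry[OF CR mc[OF sub[OF t s]] i] CR i Cx[OF sub[OF t s]] unfolding Mu_def by (simp add: B_r_def)
    show ?thesis using has_integral_eq[OF B A] unfolding Mu_def .
  qed
  have HPf: "((\<lambda>s. -\<beta> * P k s + (if k < n then Z k s else Mu (k-n) s)) has_integral P k t) {0..t}"
    if t: "t \<in> {0..T}" and k: "k < 2*n" for t k
  proof -
    have A: "((\<lambda>s. ((- \<beta>) \<cdot>\<^sub>m 1\<^sub>m (2 * n) *\<^sub>v \<phi> s + (\<zeta> s @\<^sub>v \<mu> s)) $ k) has_integral (\<phi> t $ k)) {0..t}"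
      using phe[OF t] k by simp
    have B: "((- \<beta>) \<cdot>\<^sub>m 1\<^sub>m (2 * n) *\<^sub>v \<phi> s + (\<zeta> s @\<^sub>v \<mu> s)) $ k
        = -\<beta> * P k s + (if k < n then Z k s else Mu (k-n) s)"
      if s: "s \<in> {0..t}" for s
    proof -
      have s': "s \<in> {0..T}" using sub[OF t s] .
      have "((- \<beta>) \<cdot>\<^sub>m 1\<^sub>m (2 * n) *\<^sub>v \<phi> s) $ k = (\<Sum>l<2*n. ((- \<beta>) \<cdot>\<^sub>m 1\<^sub>m (2 * n)) $$ (k,l) * \<phi> s $ l)"
        by (rule mat_vec_entry[OF _ pc[OF s'] k]) auto
      also have "\<dots> = (\<Sum>l<2*n. if l = k then -\<beta> * \<phi> s $ l else 0)"
        using k by (intro sum.cong refl) auto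
      also have "\<dots> = -\<beta> * \<phi> s $ k" using k by (simp add: sum.delta')
      finally show ?thesis using k zc[OF s'] mc[OF s'] pc[OF s'] unfolding P_def Z_def Mu_def by auto
    qed
    show ?thesis using has_integral_eq[OF B A] unfolding P_def .
  qed
  have HP: "((\<lambda>s. -\<beta> * P k s + Z k s) has_integral P k t) {0..t}" if "t \<in> {0..T}" "k < n" for t k
  proof -
    have k2: "k < 2*n" using that by simp
    have e: "(\<lambda>s. -\<beta> * P k s + (if k < n then Z k s else Mu (k-n) s)) = (\<lambda>s. -\<beta> * P k s + Z k s)"
      using that by simp
    show ?thesis using HPf[OF that(1) k2] unfolding e .
  qed
  have HP2: "((\<lambda>s. -\<beta> * P (n+k) s + Mu k s) has_integral P (n+k) t) {0..t}" if "t \<in> {0..T}" "k < n" for t k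
  proof -
    have k2: "n + k < 2*n" using that by simp
    have e: "(\<lambda>s. -\<beta> * P (n+k) s + (if n+k < n then Z (n+k) s else Mu (n+k-n) s)) = (\<lambda>s. -\<beta> * P (n+k) s + Mu k s)"
      by simp
    show ?thesis using HPf[OF that(1) k2] unfolding e .
  qed
  have HU: "((\<lambda>s. -\<beta> * \<upsilon> s + u s) has_integral \<upsilon> t) {0..t}" if "t \<in> {0..T}" for t
    using ups that unfolding T_def by blast
  obtain Ni where Ni: "mat_inverse (transpose_mat (comp_mat n c) + \<beta> \<cdot>\<^sub>m 1\<^sub>m n) = Some Ni"
    using inv_exists[OF n_pos A2] by blast
  have HE: "((\<lambda>s. (X (n-1) s + (\<Sum>l<n. (a (n-l) - c (n-l)) * Mu l s) - (\<Sum>l<n. b (n-l) * Z l s))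
         - \<beta> * epsE n c \<beta> Ni x0 s) has_integral epsE n c \<beta> Ni x0 t) {0..t}" if t: "t \<in> {0..T}" for t
  proof -
    have "((\<lambda>s. (mat_exp (transpose_mat (comp_mat n c)) s *\<^sub>v x0) $ (n-1) - \<beta> * epsE n c \<beta> Ni x0 s)
     has_integral epsE n c \<beta> Ni x0 t) {0..t}"
      by (rule eps_int[OF n_pos x0_dim Ni]) (use t in auto)
    moreover have "(mat_exp (transpose_mat (comp_mat n c)) s *\<^sub>v x0) $ (n-1) - \<beta> * epsE n c \<beta> Ni x0 s
       = (X (n-1) s + (\<Sum>l<n. (a (n-l) - c (n-l)) * Mu l s) - (\<Sum>l<n. b (n-l) * Z l s)) - \<beta> * epsE n c \<beta> Ni x0 s"
      if s: "s \<in> {0..t}" for s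
      using q_eq[OF n_pos x0_dim HX HZ HMu sub[OF t s]] by simp
    ultimately show ?thesis by (rule has_integral_eq[rotated])
  qed
  have rowid: "((\<zeta> t @\<^sub>v \<mu> t) - \<beta> \<cdot>\<^sub>v \<phi> t) $ r
      = (\<Sum>l<2*n. A_f n a b c $$ (r,l) * \<phi> t $ l) + B_f n $ r * \<upsilon> t + eps n c \<beta> x0 t $ r"
    if t: "t \<in> {0..T}" and r: "r < 2*n" for t r
  proof -
    have lhs: "((\<zeta> t @\<^sub>v \<mu> t) - \<beta> \<cdot>\<^sub>v \<phi> t) $ r = (if r < n then Z r t else Mu (r-n) t) - \<beta> * P r t"
      using zc[OF t] mc[OF t] pc[OF t] r unfolding Z_def Mu_def P_def by auto
    have split: "(\<Sum>l<2*n. A_f n a b c $$ (r,l) * \<phi> t $ l)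
        = (\<Sum>l<n. A_f n a b c $$ (r,l) * P l t) + (\<Sum>l<n. A_f n a b c $$ (r,n+l) * P (n+l) t)"
      using sum_split_add[of "\<lambda>l. A_f n a b c $$ (r,l) * \<phi> t $ l" n n] unfolding P_def by (simp add: mult_2)
    show ?thesis
    proof (cases "r < n")
      case True
      have e1: "(\<Sum>l<n. A_f n a b c $$ (r,l) * P l t) = (\<Sum>l<n. comp_mat n c $$ (r,l) * P l t)"
        using True by (intro sum.cong refl) (auto simp: A_f_def comp_mat_carrier[THEN carrier_matD(1)] comp_mat_carrier[THEN carrier_matD(2)])
      have e2: "(\<Sum>l<n. A_f n a b c $$ (r,n+l) * P (n+l) t) = 0"
        using True by (intro sum.neutral) (auto simp: A_f_def comp_mat_carrier[THEN carrier_matD(1)] comp_mat_carrier[THEN carrier_matD(2)])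
      have e3: "B_f n $ r = (if r = n-1 then 1 else 0)" using r by (simp add: B_f_def)
      have e4: "eps n c \<beta> x0 t $ r = 0" using eps_entry[OF n_pos x0_dim Ni r] True by auto
      show ?thesis unfolding lhs split e1 e2 e3 e4
        using core_top[where Z=Z and P=P and U=\<upsilon> and u=u and c=c and \<beta>=\<beta> and T=T, OF n_pos HZ HP HU True t] True by simp
    next
      case False
      define r' where "r' = r - n"
      have r': "r' < n" "r = n + r'" using r False unfolding r'_def by auto
      have e1: "(\<Sum>l<n. A_f n a b c $$ (r,l) * P l t) = (\<Sum>l<n. L_b n b $$ (r',l) * P l t)"
        using r' by (intro sum.cong refl) (auto simp: A_f_def L_b_def comp_mat_carrier[THEN carrier_matD(1)] comp_mat_carrier[THEN carrier_matD(2)])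
      have e2: "(\<Sum>l<n. A_f n a b c $$ (r,n+l) * P (n+l) t) = (\<Sum>l<n. comp_mat n a $$ (r',l) * P (n+l) t)"
        using r' by (intro sum.cong refl) (auto simp: A_f_def L_b_def comp_mat_carrier[THEN carrier_matD(1)] comp_mat_carrier[THEN carrier_matD(2)])
      have e3: "B_f n $ r = 0" using r r' by (simp add: B_f_def)
      have e4: "eps n c \<beta> x0 t $ r = (if r' = n-1 then epsE n c \<beta> Ni x0 t else 0)"
        using eps_entry[OF n_pos x0_dim Ni r] r' unfolding epsE_def by auto
      show ?thesis unfolding lhs split e1 e2 e3 e4
        using core_bot[where X=X and Z=Z and Mu=Mu and P=P and E="epsE n c \<beta> Ni x0" and a=a and b=b and c=c and \<beta>=\<beta> and T=T, OF n_pos HMu HP HP2 HE r'(1) t] r' by simp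
    qed
  qed
  show ?thesis
  proof (rule final_assembly[OF _ W_dim A3_E A3_rank])
    fix j r assume j: "j < N" and r: "r < 2*n"
    have "ts (Suc j) \<in> {0..T}" using tsk[of "Suc j"] j unfolding T_def by auto
    then show "((\<zeta> (ts (Suc j)) @\<^sub>v \<mu> (ts (Suc j))) - \<beta> \<cdot>\<^sub>v \<phi> (ts (Suc j))) $ r
      = (\<Sum>l<2*n. A_f n a b c $$ (r,l) * \<phi> (ts (Suc j)) $ l) + B_f n $ r * \<upsilon> (ts (Suc j)) + eps n c \<beta> x0 (ts (Suc j)) $ r"
      using rowid r by blast
  qed
qed

end
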